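(* Let $T$ be a bimonad on a left closed monoidal category $\mathcal C$. The following are equivalent: (i) $T$ is a left Hopf monad; (ii) the monoidal category $\mathcal C^T$ is left closed and the forgetful functor $U_T\colon\mathcal C^T\to\mathcal C$ is left closed; (iii) $T$ admits a left (binary) antipode. Moreover, in that case a left internal Hom of $T$-modules $(M,r),(N,t)$ is $([M,N]^l,\,[M,t]^l\,s^l_{M,N}\,T[r,N]^l)$ with evaluation $\mathrm{ev}^M_N$. (The analogous statement holds for right closed $\mathcal C$, right Hopf monads and right antipodes.)
   Context: Monoidal categories are strict. A bimonad on $\mathcal C$ is a monad $(T,\mu,\eta)$ with a comonoidal structure $T_2(X,Y)\colon T(X\otimes Y)\to TX\otimes TY$, $T_0\colon T\mathbb 1\to\mathbb 1$ (coassociative, counital) such that $\mu,\eta$ are comonoidal natural transformations. $\mathcal C^T$ is the category of $T$-modules, monoidal with $(M,r)\otimes(N,s)=(M\otimes N,(r\otimes s)T_2(M,N))$, unit $(\mathbb 1,T_0)$; $U_T$ is strict monoidal. $T$ is a left Hopf monad if $H^l_{X,Y}=(TX\otimes\mu_Y)T_2(X,TY)\colon T(X\otimes TY)\to TX\otimes TY$ is invertible for all $X,Y$. A monoidal category is left closed if each $?\otimes X$ has a right adjoint $[X,?]^l$, with counit $\mathrm{ev}^X_Y\colon[X,Y]^l\otimes X\to Y$ and unit $\mathrm{coev}^X_Y\colon Y\to[X,Y\otimes X]^l$; $[-,-]^l$ is a functor $\mathcal C^{op}\times\mathcal C\to\mathcal C$. A strong monoidal functor $U$ is left closed if the canonical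 maps $U[X,Y]^l\to[UX,UY]^l$ (adjoint to $U(\mathrm{ev}^X_Y)U_2([X,Y]^l,X)$) are isomorphisms. A left (binary) antipode for $T$ is a natural transformation $s^l_{X,Y}\colon T[TX,Y]^l\to[X,TY]^l$ such that for all $X,Y$: (1) $T\big(\mathrm{ev}^X_Y([\eta_X,Y]^l\otimes X)\big)=\mathrm{ev}^{TX}_{TY}\big(s^l_{TX,Y}\,T[\mu_X,Y]^l\otimes TX\big)T_2([TX,Y]^l,X)$; (2) $[X,TY\otimes\eta_X]^l\,\mathrm{coev}^X_{TY}=[X,(TY\otimes\mu_X)T_2(Y,TX)]^l\,s^l_{X,Y\otimes TX}\,T(\mathrm{coev}^{TX}_Y)$. *)

theory Defs
  imports Main
begin

text \<open>Categories given by explicit data: objects, hom-sets, composition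
  (cmp g f = g after f) and identities.\<close>

record ('o, 'm) cat =
  c_ob   :: "'o set"
  c_hom  :: "'o \<Rightarrow> 'o \<Rightarrow> 'm set"
  c_comp :: "'m \<Rightarrow> 'm \<Rightarrow> 'm"
  c_id   :: "'o \<Rightarrow> 'm"

record ('o, 'm) mcat = "('o, 'm) cat" +
  c_tens_o :: "'o \<Rightarrow> 'o \<Rightarrow> 'o"
  c_tens_m :: "'m \<Rightarrow> 'm \<Rightarrow> 'm"
  c_unit   :: "'o"

definition category :: "('o, 'm, 'x) cat_scheme \<Rightarrow> bool" where
  "category C \<longleftrightarrow>
     (\<forall>a b. c_hom C a b \<noteq> {} \<longrightarrow> a \<in> c_ob C \<and> b \<in> c_ob C) \<and>
     (\<forall>a b a' b' f. f \<in> c_hom C a b \<longrightarrow> f \<in> c_hom C a' b' \<longrightarrow> a = a' \<and> b = b') \<and>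
     (\<forall>a \<in> c_ob C. c_id C a \<in> c_hom C a a) \<and>
     (\<forall>a b c f g. f \<in> c_hom C a b \<longrightarrow> g \<in> c_hom C b c \<longrightarrow> c_comp C g f \<in> c_hom C a c) \<and>
     (\<forall>a b f. f \<in> c_hom C a b \<longrightarrow> c_comp C f (c_id C a) = f \<and> c_comp C (c_id C b) f = f) \<and>
     (\<forall>a b c d f g h. f \<in> c_hom C a b \<longrightarrow> g \<in> c_hom C b c \<longrightarrow> h \<in> c_hom C c d \<longrightarrow>
        c_comp C h (c_comp C g f) = c_comp C (c_comp C h g) f)"

definition iso :: "('o, 'm, 'x) cat_scheme \<Rightarrow> 'm \<Rightarrow> 'o \<Rightarrow> 'o \<Rightarrow> bool" where
  "iso C f a b \<longleftrightarrow> f \<in> c_hom C a b \<and>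
     (\<exists>g \<in> c_hom C b a. c_comp C g f = c_id C a \<and> c_comp C f g = c_id C b)"

definition strict_monoidal :: "('o, 'm, 'x) mcat_scheme \<Rightarrow> bool" where
  "strict_monoidal C \<longleftrightarrow> category C \<and>
     c_unit C \<in> c_ob C \<and>
     (\<forall>a \<in> c_ob C. \<forall>b \<in> c_ob C. c_tens_o C a b \<in> c_ob C) \<and>
     (\<forall>a b c d f g. f \<in> c_hom C a b \<longrightarrow> g \<in> c_hom C c d \<longrightarrow>
        c_tens_m C f g \<in> c_hom C (c_tens_o C a c) (c_tens_o C b d)) \<and>
     (\<forall>a \<in> c_ob C. \<forall>b \<in> c_ob C. c_tens_m C (c_id C a) (c_id C b) = c_id C (c_tens_o C a b)) \<and>
     (\<forall>a b c a' b' c' f g f' g'. f \<in> c_hom C a b \<longrightarrow> g \<in> c_hom C b c \<longrightarrow>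
        f' \<in> c_hom C a' b' \<longrightarrow> g' \<in> c_hom C b' c' \<longrightarrow>
        c_tens_m C (c_comp C g f) (c_comp C g' f') = c_comp C (c_tens_m C g g') (c_tens_m C f f')) \<and>
     (\<forall>a \<in> c_ob C. \<forall>b \<in> c_ob C. \<forall>c \<in> c_ob C.
        c_tens_o C (c_tens_o C a b) c = c_tens_o C a (c_tens_o C b c)) \<and>
     (\<forall>a b c d e h f g k. f \<in> c_hom C a b \<longrightarrow> g \<in> c_hom C c d \<longrightarrow> k \<in> c_hom C e h \<longrightarrow>
        c_tens_m C (c_tens_m C f g) k = c_tens_m C f (c_tens_m C g k)) \<and>
     (\<forall>a \<in> c_ob C. c_tens_o C (c_unit C) a = a \<and> c_tens_o C a (c_unit C) = a) \<and>
     (\<forall>a b f. f \<in> c_hom C a b \<longrightarrow>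
        c_tens_m C (c_id C (c_unit C)) f = f \<and> c_tens_m C f (c_id C (c_unit C)) = f)"

definition is_left_ihom :: "('o, 'm, 'x) mcat_scheme \<Rightarrow> 'o \<Rightarrow> 'o \<Rightarrow> 'o \<Rightarrow> 'm \<Rightarrow> bool" where
  "is_left_ihom C X Y H e \<longleftrightarrow> H \<in> c_ob C \<and> e \<in> c_hom C (c_tens_o C H X) Y \<and>
     (\<forall>A \<in> c_ob C. \<forall>f \<in> c_hom C (c_tens_o C A X) Y.
        \<exists>!g. g \<in> c_hom C A H \<and> c_comp C e (c_tens_m C g (c_id C X)) = f)"

definition left_closed_via :: "('o, 'm, 'x) mcat_scheme \<Rightarrow> ('o \<Rightarrow> 'o \<Rightarrow> 'o) \<Rightarrow> ('o \<Rightarrow> 'o \<Rightarrow> 'm) \<Rightarrow> bool" where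
  "left_closed_via C H e \<longleftrightarrow> (\<forall>X \<in> c_ob C. \<forall>Y \<in> c_ob C. is_left_ihom C X Y (H X Y) (e X Y))"

definition left_closed :: "('o, 'm, 'x) mcat_scheme \<Rightarrow> bool" where
  "left_closed C \<longleftrightarrow> (\<exists>H e. left_closed_via C H e)"

text \<open>Chosen left closed structure of \<open>C\<close>: internal Hom on objects \<open>ih X Y = [X,Y]\<^sup>l\<close>,
  its action on morphisms \<open>ihm f g = [f,g]\<^sup>l\<close> (contravariant in \<open>f\<close>), evaluation
  \<open>ev X Y\<close> and coevaluation \<open>coev X Y : Y \<rightarrow> [X, Y \<otimes> X]\<^sup>l\<close>.\<close>

record ('o, 'm) lclosed =
  ih   :: "'o \<Rightarrow> 'o \<Rightarrow> 'o"
  ihm  :: "'m \<Rightarrow> 'm \<Rightarrow> 'm"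
  ev   :: "'o \<Rightarrow> 'o \<Rightarrow> 'm"
  coev :: "'o \<Rightarrow> 'o \<Rightarrow> 'm"

definition left_closed_data :: "('o, 'm, 'x) mcat_scheme \<Rightarrow> ('o, 'm) lclosed \<Rightarrow> bool" where
  "left_closed_data C L \<longleftrightarrow> left_closed_via C (ih L) (ev L) \<and>
     (\<forall>X X' Y Y' f g. f \<in> c_hom C X' X \<longrightarrow> g \<in> c_hom C Y Y' \<longrightarrow>
        ihm L f g \<in> c_hom C (ih L X Y) (ih L X' Y') \<and>
        c_comp C (ev L X' Y') (c_tens_m C (ihm L f g) (c_id C X'))
          = c_comp C g (c_comp C (ev L X Y) (c_tens_m C (c_id C (ih L X Y)) f))) \<and>
     (\<forall>X \<in> c_ob C. \<forall>Y \<in> c_ob C.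
        coev L X Y \<in> c_hom C Y (ih L X (c_tens_o C Y X)) \<and>
        c_comp C (ev L X (c_tens_o C Y X)) (c_tens_m C (coev L X Y) (c_id C X))
          = c_id C (c_tens_o C Y X))"

record ('o, 'm) bimon =
  tob  :: "'o \<Rightarrow> 'o"
  tmor :: "'m \<Rightarrow> 'm"
  mu   :: "'o \<Rightarrow> 'm"
  eta  :: "'o \<Rightarrow> 'm"
  t2   :: "'o \<Rightarrow> 'o \<Rightarrow> 'm"
  t0   :: "'m"

definition bimonad :: "('o, 'm, 'x) mcat_scheme \<Rightarrow> ('o, 'm) bimon \<Rightarrow> bool" where
  "bimonad C T \<longleftrightarrow>
     \<comment> \<open>functor\<close>
     (\<forall>X \<in> c_ob C. tob T X \<in> c_ob C \<and> tmor T (c_id C X) = c_id C (tob T X)) \<and>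
     (\<forall>a b f. f \<in> c_hom C a b \<longrightarrow> tmor T f \<in> c_hom C (tob T a) (tob T b)) \<and>
     (\<forall>a b c f g. f \<in> c_hom C a b \<longrightarrow> g \<in> c_hom C b c \<longrightarrow>
        tmor T (c_comp C g f) = c_comp C (tmor T g) (tmor T f)) \<and>
     \<comment> \<open>monad\<close>
     (\<forall>X \<in> c_ob C. mu T X \<in> c_hom C (tob T (tob T X)) (tob T X) \<and> eta T X \<in> c_hom C X (tob T X)) \<and>
     (\<forall>a b f. f \<in> c_hom C a b \<longrightarrow>
        c_comp C (mu T b) (tmor T (tmor T f)) = c_comp C (tmor T f) (mu T a) \<and>
        c_comp C (eta T b) f = c_comp C (tmor T f) (eta T a)) \<and>
     (\<forall>X \<in> c_ob C. c_comp C (mu T X) (tmor T (mu T X)) = c_comp C (mu T X) (mu T (tob T X)) \<and>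
        c_comp C (mu T X) (eta T (tob T X)) = c_id C (tob T X) \<and>
        c_comp C (mu T X) (tmor T (eta T X)) = c_id C (tob T X)) \<and>
     \<comment> \<open>comonoidal functor\<close>
     (\<forall>X \<in> c_ob C. \<forall>Y \<in> c_ob C.
        t2 T X Y \<in> c_hom C (tob T (c_tens_o C X Y)) (c_tens_o C (tob T X) (tob T Y))) \<and>
     t0 T \<in> c_hom C (tob T (c_unit C)) (c_unit C) \<and>
     (\<forall>a b c d f g. f \<in> c_hom C a b \<longrightarrow> g \<in> c_hom C c d \<longrightarrow>
        c_comp C (t2 T b d) (tmor T (c_tens_m C f g))
          = c_comp C (c_tens_m C (tmor T f) (tmor T g)) (t2 T a c)) \<and>
     (\<forall>X \<in> c_ob C. \<forall>Y \<in> c_ob C. \<forall>Z \<in> c_ob C.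
        c_comp C (c_tens_m C (t2 T X Y) (c_id C (tob T Z))) (t2 T (c_tens_o C X Y) Z)
          = c_comp C (c_tens_m C (c_id C (tob T X)) (t2 T Y Z)) (t2 T X (c_tens_o C Y Z))) \<and>
     (\<forall>X \<in> c_ob C.
        c_comp C (c_tens_m C (t0 T) (c_id C (tob T X))) (t2 T (c_unit C) X) = c_id C (tob T X) \<and>
        c_comp C (c_tens_m C (c_id C (tob T X)) (t0 T)) (t2 T X (c_unit C)) = c_id C (tob T X)) \<and>
     \<comment> \<open>mu and eta are comonoidal natural transformations\<close>
     (\<forall>X \<in> c_ob C. \<forall>Y \<in> c_ob C.
        c_comp C (t2 T X Y) (mu T (c_tens_o C X Y))
          = c_comp C (c_tens_m C (mu T X) (mu T Y))
              (c_comp C (t2 T (tob T X) (tob T Y)) (tmor T (t2 T X Y))) \<and>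
        c_comp C (t2 T X Y) (eta T (c_tens_o C X Y)) = c_tens_m C (eta T X) (eta T Y)) \<and>
     c_comp C (t0 T) (mu T (c_unit C)) = c_comp C (t0 T) (tmor T (t0 T)) \<and>
     c_comp C (t0 T) (eta T (c_unit C)) = c_id C (c_unit C)"

definition em_ob :: "('o, 'm, 'x) mcat_scheme \<Rightarrow> ('o, 'm) bimon \<Rightarrow> ('o \<times> 'm) set" where
  "em_ob C T = {(M, r). M \<in> c_ob C \<and> r \<in> c_hom C (tob T M) M \<and>
      c_comp C r (tmor T r) = c_comp C r (mu T M) \<and> c_comp C r (eta T M) = c_id C M}"

definition EM :: "('o, 'm, 'x) mcat_scheme \<Rightarrow> ('o, 'm) bimon \<Rightarrow> ('o \<times> 'm, 'm) mcat" where
  "EM C T = \<lparr> c_ob = em_ob C T,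
     c_hom = (\<lambda>(M, r) (N, s). {f. (M, r) \<in> em_ob C T \<and> (N, s) \<in> em_ob C T \<and>
                f \<in> c_hom C M N \<and> c_comp C s (tmor T f) = c_comp C f r}),
     c_comp = c_comp C,
     c_id = (\<lambda>(M, r). c_id C M),
     c_tens_o = (\<lambda>(M, r) (N, s). (c_tens_o C M N, c_comp C (c_tens_m C r s) (t2 T M N))),
     c_tens_m = c_tens_m C,
     c_unit = (c_unit C, t0 T) \<rparr>"

definition left_hopf :: "('o, 'm, 'x) mcat_scheme \<Rightarrow> ('o, 'm) bimon \<Rightarrow> bool" where
  "left_hopf C T \<longleftrightarrow> (\<forall>X \<in> c_ob C. \<forall>Y \<in> c_ob C.
     iso C (c_comp C (c_tens_m C (c_id C (tob T X)) (mu T Y)) (t2 T X (tob T Y)))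
           (tob T (c_tens_o C X (tob T Y))) (c_tens_o C (tob T X) (tob T Y)))"

text \<open>The (strict monoidal) forgetful functor \<open>U\<^sub>T\<close> is left closed w.r.t. a left closed
  structure \<open>(H, e)\<close> of \<open>C\<^sup>T\<close>: the canonical comparison map
  \<open>U[(M,r),(N,s)] \<rightarrow> [M,N]\<^sup>l\<close> (the unique map adjoint to \<open>U(e)\<close>) is an isomorphism.\<close>

definition forgetful_left_closed ::
  "('o, 'm, 'x) mcat_scheme \<Rightarrow> ('o, 'm) lclosed \<Rightarrow> ('o, 'm) bimon \<Rightarrow>
   ('o \<times> 'm \<Rightarrow> 'o \<times> 'm \<Rightarrow> 'o \<times> 'm) \<Rightarrow> ('o \<times> 'm \<Rightarrow> 'o \<times> 'm \<Rightarrow> 'm) \<Rightarrow> bool" where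
  "forgetful_left_closed C L T H e \<longleftrightarrow>
     (\<forall>M r N s. (M, r) \<in> em_ob C T \<longrightarrow> (N, s) \<in> em_ob C T \<longrightarrow>
        (\<exists>\<phi>. \<phi> \<in> c_hom C (fst (H (M, r) (N, s))) (ih L M N) \<and>
            c_comp C (ev L M N) (c_tens_m C \<phi> (c_id C M)) = e (M, r) (N, s) \<and>
            iso C \<phi> (fst (H (M, r) (N, s))) (ih L M N)))"

definition left_antipode ::
  "('o, 'm, 'x) mcat_scheme \<Rightarrow> ('o, 'm) lclosed \<Rightarrow> ('o, 'm) bimon \<Rightarrow> ('o \<Rightarrow> 'o \<Rightarrow> 'm) \<Rightarrow> bool" where
  "left_antipode C L T s \<longleftrightarrow>
     (\<forall>X \<in> c_ob C. \<forall>Y \<in> c_ob C.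
        s X Y \<in> c_hom C (tob T (ih L (tob T X) Y)) (ih L X (tob T Y))) \<and>
     \<comment> \<open>naturality in \<open>X\<close> (contravariant) and \<open>Y\<close>\<close>
     (\<forall>X X' Y Y' f g. f \<in> c_hom C X' X \<longrightarrow> g \<in> c_hom C Y Y' \<longrightarrow>
        c_comp C (s X' Y') (tmor T (ihm L (tmor T f) g)) = c_comp C (ihm L f (tmor T g)) (s X Y)) \<and>
     \<comment> \<open>axiom (1)\<close>
     (\<forall>X \<in> c_ob C. \<forall>Y \<in> c_ob C.
        tmor T (c_comp C (ev L X Y) (c_tens_m C (ihm L (eta T X) (c_id C Y)) (c_id C X)))
        = c_comp C (ev L (tob T X) (tob T Y))
            (c_comp C (c_tens_m C (c_comp C (s (tob T X) Y) (tmor T (ihm L (mu T X) (c_id C Y))))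
                                  (c_id C (tob T X)))
                      (t2 T (ih L (tob T X) Y) X))) \<and>
     \<comment> \<open>axiom (2)\<close>
     (\<forall>X \<in> c_ob C. \<forall>Y \<in> c_ob C.
        c_comp C (ihm L (c_id C X) (c_tens_m C (c_id C (tob T Y)) (eta T X))) (coev L X (tob T Y))
        = c_comp C (ihm L (c_id C X) (c_comp C (c_tens_m C (c_id C (tob T Y)) (mu T X)) (t2 T Y (tob T X))))
            (c_comp C (s X (c_tens_o C Y (tob T X))) (tmor T (coev L (tob T X) Y))))"

definition ihom_action ::
  "('o, 'm, 'x) mcat_scheme \<Rightarrow> ('o, 'm) lclosed \<Rightarrow> ('o, 'm) bimon \<Rightarrow> ('o \<Rightarrow> 'o \<Rightarrow> 'm) \<Rightarrow>
   'o \<Rightarrow> 'm \<Rightarrow> 'o \<Rightarrow> 'm \<Rightarrow> 'm" where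
  "ihom_action C L T s M r N t =
     c_comp C (ihm L (c_id C M) t) (c_comp C (s M N) (tmor T (ihm L r (c_id C N))))"

end

theory Submission
  imports Defs
begin

locale hs =
  fixes C :: "('o, 'm) mcat" and L :: "('o, 'm) lclosed" and T :: "('o, 'm) bimon"
  assumes SM: "strict_monoidal C"
    and LC: "left_closed_data C L"
    and BM: "bimonad C T"
begin

abbreviation Ob where "Ob \<equiv> c_ob C"
abbreviation Hom where "Hom \<equiv> c_hom C"
abbreviation cmp (infixr "\<cdot>" 55) where "g \<cdot> f \<equiv> c_comp C g f"
abbreviation tms (infixr "\<otimes>" 60) where "f \<otimes> g \<equiv> c_tens_m C f g"
abbreviation tob' (infixr "\<odot>" 60) where "a \<odot> b \<equiv> c_tens_o C a b"
abbreviation idm where "idm \<equiv> c_id C"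
abbreviation Tm where "Tm \<equiv> tmor T"
abbreviation To where "To \<equiv> tob T"
abbreviation Mu where "Mu \<equiv> mu T"
abbreviation Eta where "Eta \<equiv> eta T"
abbreviation T2 where "T2 \<equiv> t2 T"
abbreviation Ih where "Ih \<equiv> ih L"
abbreviation Ihm where "Ihm \<equiv> ihm L"
abbreviation Ev where "Ev \<equiv> ev L"
abbreviation Coev where "Coev \<equiv> coev L"

lemma CAT: "category C" using SM unfolding strict_monoidal_def by (rule conjunct1)
lemmas ca1 = CAT[unfolded category_def, THEN conjunct1]
lemmas ca2 = CAT[unfolded category_def, THEN conjunct2, THEN conjunct1]
lemmas ca3 = CAT[unfolded category_def, THEN conjunct2, THEN conjunct2, THEN conjunct1]
lemmas ca4 = CAT[unfolded category_def, THEN conjunct2, THEN conjunct2, THEN conjunct2, THEN conjunct1]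
lemmas ca5 = CAT[unfolded category_def, THEN conjunct2, THEN conjunct2, THEN conjunct2, THEN conjunct2, THEN conjunct1]
lemmas ca6 = CAT[unfolded category_def, THEN conjunct2, THEN conjunct2, THEN conjunct2, THEN conjunct2, THEN conjunct2]
lemmas sm1 = SM[unfolded strict_monoidal_def, THEN conjunct1]
lemmas sm2 = SM[unfolded strict_monoidal_def, THEN conjunct2, THEN conjunct1]
lemmas sm3 = SM[unfolded strict_monoidal_def, THEN conjunct2, THEN conjunct2, THEN conjunct1]
lemmas sm4 = SM[unfolded strict_monoidal_def, THEN conjunct2, THEN conjunct2, THEN conjunct2, THEN conjunct1]
lemmas sm5 = SM[unfolded strict_monoidal_def, THEN conjunct2, THEN conjunct2, THEN conjunct2, THEN conjunct2, THEN conjunct1]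
lemmas sm6 = SM[unfolded strict_monoidal_def, THEN conjunct2, THEN conjunct2, THEN conjunct2, THEN conjunct2, THEN conjunct2, THEN conjunct1]
lemmas sm7 = SM[unfolded strict_monoidal_def, THEN conjunct2, THEN conjunct2, THEN conjunct2, THEN conjunct2, THEN conjunct2, THEN conjunct2, THEN conjunct1]
lemmas sm8 = SM[unfolded strict_monoidal_def, THEN conjunct2, THEN conjunct2, THEN conjunct2, THEN conjunct2, THEN conjunct2, THEN conjunct2, THEN conjunct2, THEN conjunct1]
lemmas sm9 = SM[unfolded strict_monoidal_def, THEN conjunct2, THEN conjunct2, THEN conjunct2, THEN conjunct2, THEN conjunct2, THEN conjunct2, THEN conjunct2, THEN conjunct2, THEN conjunct1]
lemmas sm10 = SM[unfolded strict_monoidal_def, THEN conjunct2, THEN conjunct2, THEN conjunct2, THEN conjunct2, THEN conjunct2, THEN conjunct2, THEN conjunct2, THEN conjunct2, THEN conjunct2]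
lemmas lcd1 = LC[unfolded left_closed_data_def, THEN conjunct1]
lemmas lcd2 = LC[unfolded left_closed_data_def, THEN conjunct2, THEN conjunct1]
lemmas lcd3 = LC[unfolded left_closed_data_def, THEN conjunct2, THEN conjunct2]
lemmas bm1 = BM[unfolded bimonad_def, THEN conjunct1]
lemmas bm2 = BM[unfolded bimonad_def, THEN conjunct2, THEN conjunct1]
lemmas bm3 = BM[unfolded bimonad_def, THEN conjunct2, THEN conjunct2, THEN conjunct1]
lemmas bm4 = BM[unfolded bimonad_def, THEN conjunct2, THEN conjunct2, THEN conjunct2, THEN conjunct1]
lemmas bm5 = BM[unfolded bimonad_def, THEN conjunct2, THEN conjunct2, THEN conjunct2, THEN conjunct2, THEN conjunct1]
lemmas bm6 = BM[unfolded bimonad_def, THEN conjunct2, THEN conjunct2, THEN conjunct2, THEN conjunct2, THEN conjunct2, THEN conjunct1]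
lemmas bm7 = BM[unfolded bimonad_def, THEN conjunct2, THEN conjunct2, THEN conjunct2, THEN conjunct2, THEN conjunct2, THEN conjunct2, THEN conjunct1]
lemmas bm8 = BM[unfolded bimonad_def, THEN conjunct2, THEN conjunct2, THEN conjunct2, THEN conjunct2, THEN conjunct2, THEN conjunct2, THEN conjunct2, THEN conjunct1]
lemmas bm9 = BM[unfolded bimonad_def, THEN conjunct2, THEN conjunct2, THEN conjunct2, THEN conjunct2, THEN conjunct2, THEN conjunct2, THEN conjunct2, THEN conjunct2, THEN conjunct1]
lemmas bm10 = BM[unfolded bimonad_def, THEN conjunct2, THEN conjunct2, THEN conjunct2, THEN conjunct2, THEN conjunct2, THEN conjunct2, THEN conjunct2, THEN conjunct2, THEN conjunct2, THEN conjunct1]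
lemmas bm11 = BM[unfolded bimonad_def, THEN conjunct2, THEN conjunct2, THEN conjunct2, THEN conjunct2, THEN conjunct2, THEN conjunct2, THEN conjunct2, THEN conjunct2, THEN conjunct2, THEN conjunct2, THEN conjunct1]
lemmas bm12 = BM[unfolded bimonad_def, THEN conjunct2, THEN conjunct2, THEN conjunct2, THEN conjunct2, THEN conjunct2, THEN conjunct2, THEN conjunct2, THEN conjunct2, THEN conjunct2, THEN conjunct2, THEN conjunct2, THEN conjunct1]
lemmas bm13 = BM[unfolded bimonad_def, THEN conjunct2, THEN conjunct2, THEN conjunct2, THEN conjunct2, THEN conjunct2, THEN conjunct2, THEN conjunct2, THEN conjunct2, THEN conjunct2, THEN conjunct2, THEN conjunct2, THEN conjunct2, THEN conjunct1]
lemmas bm14 = BM[unfolded bimonad_def, THEN conjunct2, THEN conjunct2, THEN conjunct2, THEN conjunct2, THEN conjunct2, THEN conjunct2, THEN conjunct2, THEN conjunct2, THEN conjunct2, THEN conjunct2, THEN conjunct2, THEN conjunct2, THEN conjunct2]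

definition ar :: "'m \<Rightarrow> bool" where "ar f \<longleftrightarrow> (\<exists>a b. f \<in> Hom a b)"
definition dm :: "'m \<Rightarrow> 'o" where "dm f = (THE a. \<exists>b. f \<in> Hom a b)"
definition cd :: "'m \<Rightarrow> 'o" where "cd f = (THE b. \<exists>a. f \<in> Hom a b)"

lemma hom_uniq: "f \<in> Hom a b \<Longrightarrow> f \<in> Hom a' b' \<Longrightarrow> a = a' \<and> b = b'"
  using ca2 by blast

lemma homD: assumes "f \<in> Hom a b" shows "ar f" "dm f = a" "cd f = b"
proof -
  show "ar f" using assms ar_def by blast
  show "dm f = a" unfolding dm_def using assms hom_uniq by blast
  show "cd f = b" unfolding cd_def using assms hom_uniq by blast
qed

lemma hom_iff: "f \<in> Hom a b \<longleftrightarrow> ar f \<and> dm f = a \<and> cd f = b"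
  using homD ar_def by metis

lemma ar_hom: "ar f \<Longrightarrow> f \<in> Hom (dm f) (cd f)"
  using hom_iff by blast

lemma hom_ob: "f \<in> Hom a b \<Longrightarrow> a \<in> Ob \<and> b \<in> Ob"
  using ca1 by blast

lemma dm_ob[simp]: "ar f \<Longrightarrow> dm f \<in> Ob" and cd_ob[simp]: "ar f \<Longrightarrow> cd f \<in> Ob"
  using hom_ob ar_hom by blast+

lemma comp_hom: "f \<in> Hom a b \<Longrightarrow> g \<in> Hom b c \<Longrightarrow> g \<cdot> f \<in> Hom a c"
  using ca4 by blast

lemma ar_comp[simp]: "ar f \<Longrightarrow> ar g \<Longrightarrow> dm g = cd f \<Longrightarrow> ar (g \<cdot> f)"
  and dm_comp[simp]: "ar f \<Longrightarrow> ar g \<Longrightarrow> dm g = cd f \<Longrightarrow> dm (g \<cdot> f) = dm f"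
  and cd_comp[simp]: "ar f \<Longrightarrow> ar g \<Longrightarrow> dm g = cd f \<Longrightarrow> cd (g \<cdot> f) = cd g"
proof -
  assume a: "ar f" "ar g" "dm g = cd f"
  hence "g \<cdot> f \<in> Hom (dm f) (cd g)" using comp_hom[OF ar_hom[of f], of g "cd g"] ar_hom[of g] by simp
  thus "ar (g \<cdot> f)" "dm (g \<cdot> f) = dm f" "cd (g \<cdot> f) = cd g" using hom_iff by auto
qed

lemma id_hom: "a \<in> Ob \<Longrightarrow> idm a \<in> Hom a a"
  using ca3 by blast

lemma ar_id[simp]: "a \<in> Ob \<Longrightarrow> ar (idm a)" and dm_id[simp]: "a \<in> Ob \<Longrightarrow> dm (idm a) = a"
  and cd_id[simp]: "a \<in> Ob \<Longrightarrow> cd (idm a) = a"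
  using id_hom hom_iff by blast+

lemma comp_id_r[simp]: "ar f \<Longrightarrow> dm f = a \<Longrightarrow> f \<cdot> idm a = f"
  and comp_id_l[simp]: "ar f \<Longrightarrow> cd f = a \<Longrightarrow> idm a \<cdot> f = f"
  using ca5 ar_hom by blast+

lemma assoc[simp]: "ar f \<Longrightarrow> ar g \<Longrightarrow> ar h \<Longrightarrow> dm g = cd f \<Longrightarrow> dm h = cd g \<Longrightarrow>
   (h \<cdot> g) \<cdot> f = h \<cdot> (g \<cdot> f)"
proof -
  assume a: "ar f" "ar g" "ar h" "dm g = cd f" "dm h = cd g"
  have "f \<in> Hom (dm f) (cd f)" "g \<in> Hom (cd f) (cd g)" "h \<in> Hom (cd g) (cd h)" using a ar_hom by metis+
  from ca6[rule_format, OF this] show ?thesis by simp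
qed

lemma unit_ob[simp]: "c_unit C \<in> Ob" using sm2 by blast
lemma tens_ob[simp]: "a \<in> Ob \<Longrightarrow> b \<in> Ob \<Longrightarrow> a \<odot> b \<in> Ob"
  using sm3 by blast
lemma tens_hom: "f \<in> Hom a b \<Longrightarrow> g \<in> Hom c d \<Longrightarrow> f \<otimes> g \<in> Hom (a \<odot> c) (b \<odot> d)"
  using sm4 by blast
lemma ar_tens[simp]: "ar f \<Longrightarrow> ar g \<Longrightarrow> ar (f \<otimes> g)"
  and dm_tens[simp]: "ar f \<Longrightarrow> ar g \<Longrightarrow> dm (f \<otimes> g) = dm f \<odot> dm g"
  and cd_tens[simp]: "ar f \<Longrightarrow> ar g \<Longrightarrow> cd (f \<otimes> g) = cd f \<odot> cd g"
  using tens_hom[OF ar_hom ar_hom] hom_iff by blast+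
lemma tens_id[simp]: "a \<in> Ob \<Longrightarrow> b \<in> Ob \<Longrightarrow> idm a \<otimes> idm b = idm (a \<odot> b)"
  using sm5 by blast
lemma interchange: "ar f \<Longrightarrow> ar g \<Longrightarrow> ar f' \<Longrightarrow> ar g' \<Longrightarrow> dm g = cd f \<Longrightarrow> dm g' = cd f' \<Longrightarrow>
   (g \<otimes> g') \<cdot> (f \<otimes> f') = (g \<cdot> f) \<otimes> (g' \<cdot> f')"
proof -
  assume a: "ar f" "ar g" "ar f'" "ar g'" "dm g = cd f" "dm g' = cd f'"
  have "f \<in> Hom (dm f) (cd f)" "g \<in> Hom (cd f) (cd g)" "f' \<in> Hom (dm f') (cd f')" "g' \<in> Hom (cd f') (cd g')" using a ar_hom by metis+
  from sm6[rule_format, OF this] show ?thesis by simp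
qed
lemma tens_assoc_ob[simp]: "a \<in> Ob \<Longrightarrow> b \<in> Ob \<Longrightarrow> c \<in> Ob \<Longrightarrow> (a \<odot> b) \<odot> c = a \<odot> (b \<odot> c)"
  using sm7 by blast
lemma tens_assoc[simp]: "ar f \<Longrightarrow> ar g \<Longrightarrow> ar h \<Longrightarrow> (f \<otimes> g) \<otimes> h = f \<otimes> (g \<otimes> h)"
  using sm8 ar_hom by blast
lemma unit_l[simp]: "a \<in> Ob \<Longrightarrow> c_unit C \<odot> a = a" and unit_r[simp]: "a \<in> Ob \<Longrightarrow> a \<odot> c_unit C = a"
  using sm9 by blast+

lemma LCV: "left_closed_via C Ih Ev" using lcd1 by blast
lemma ihX: "X \<in> Ob \<Longrightarrow> Y \<in> Ob \<Longrightarrow> is_left_ihom C X Y (Ih X Y) (Ev X Y)"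
  using LCV unfolding left_closed_via_def by blast
lemma ih_ob[simp]: "X \<in> Ob \<Longrightarrow> Y \<in> Ob \<Longrightarrow> Ih X Y \<in> Ob"
  using ihX unfolding is_left_ihom_def by blast
lemma ev_hom: "X \<in> Ob \<Longrightarrow> Y \<in> Ob \<Longrightarrow> Ev X Y \<in> Hom (Ih X Y \<odot> X) Y"
  using ihX unfolding is_left_ihom_def by blast
lemma ar_ev[simp]: "X \<in> Ob \<Longrightarrow> Y \<in> Ob \<Longrightarrow> ar (Ev X Y)"
  and dm_ev[simp]: "X \<in> Ob \<Longrightarrow> Y \<in> Ob \<Longrightarrow> dm (Ev X Y) = Ih X Y \<odot> X"
  and cd_ev[simp]: "X \<in> Ob \<Longrightarrow> Y \<in> Ob \<Longrightarrow> cd (Ev X Y) = Y"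
  using ev_hom hom_iff by blast+
lemma ev_univ: "X \<in> Ob \<Longrightarrow> Y \<in> Ob \<Longrightarrow> A \<in> Ob \<Longrightarrow> f \<in> Hom (A \<odot> X) Y \<Longrightarrow>
   \<exists>!g. g \<in> Hom A (Ih X Y) \<and> Ev X Y \<cdot> (g \<otimes> idm X) = f"
proof -
  assume a: "X \<in> Ob" "Y \<in> Ob" "A \<in> Ob" "f \<in> Hom (A \<odot> X) Y"
  have "\<forall>A \<in> Ob. \<forall>f \<in> Hom (A \<odot> X) Y. \<exists>!g. g \<in> Hom A (Ih X Y) \<and> Ev X Y \<cdot> (g \<otimes> idm X) = f"
    using ihX[OF a(1,2)] unfolding is_left_ihom_def by (elim conjE)
  thus ?thesis using a(3,4) by blast
qed
lemma ev_ex: assumes "X \<in> Ob" "Y \<in> Ob" "ar f" "dm f = A \<odot> X" "cd f = Y" "A \<in> Ob"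
  shows "\<exists>g. ar g \<and> dm g = A \<and> cd g = Ih X Y \<and> Ev X Y \<cdot> (g \<otimes> idm X) = f"
proof -
  have "f \<in> Hom (A \<odot> X) Y" using assms hom_iff by blast
  from ex1_implies_ex[OF ev_univ[OF assms(1,2,6) this]] obtain g where "g \<in> Hom A (Ih X Y)" "Ev X Y \<cdot> (g \<otimes> idm X) = f" by (elim exE conjE)
  thus ?thesis using hom_iff by blast
qed
lemma ev_uniq: assumes "X \<in> Ob" "Y \<in> Ob" "ar g" "ar g'" "dm g' = dm g" "cd g = Ih X Y" "cd g' = Ih X Y"
  "Ev X Y \<cdot> (g \<otimes> idm X) = Ev X Y \<cdot> (g' \<otimes> idm X)"
  shows "g = g'"
proof -
  have ar1: "ar (Ev X Y \<cdot> (g \<otimes> idm X))" "dm (Ev X Y \<cdot> (g \<otimes> idm X)) = dm g \<odot> X" "cd (Ev X Y \<cdot> (g \<otimes> idm X)) = Y"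
    using assms(1-3,6) by simp_all
  hence "Ev X Y \<cdot> (g \<otimes> idm X) \<in> Hom (dm g \<odot> X) Y" using hom_iff by blast
  from ev_univ[OF assms(1,2) _ this] have u: "\<exists>!x. x \<in> Hom (dm g) (Ih X Y) \<and> Ev X Y \<cdot> (x \<otimes> idm X) = Ev X Y \<cdot> (g \<otimes> idm X)"
    using assms(3) by simp
  have "g \<in> Hom (dm g) (Ih X Y)" "g' \<in> Hom (dm g) (Ih X Y)" using assms(3-7) hom_iff by auto
  with u assms(8) show ?thesis by (metis (no_types, lifting))
qed

lemma ihm_hom: "ar f \<Longrightarrow> ar g \<Longrightarrow> Ihm f g \<in> Hom (Ih (cd f) (dm g)) (Ih (dm f) (cd g))"
  using lcd2[rule_format, OF ar_hom ar_hom] by (rule conjunct1)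
lemma ar_ihm[simp]: "ar f \<Longrightarrow> ar g \<Longrightarrow> ar (Ihm f g)"
  and dm_ihm[simp]: "ar f \<Longrightarrow> ar g \<Longrightarrow> dm (Ihm f g) = Ih (cd f) (dm g)"
  and cd_ihm[simp]: "ar f \<Longrightarrow> ar g \<Longrightarrow> cd (Ihm f g) = Ih (dm f) (cd g)"
  using ihm_hom hom_iff by blast+
lemma ihm_ev: "ar f \<Longrightarrow> ar g \<Longrightarrow>
   Ev (dm f) (cd g) \<cdot> (Ihm f g \<otimes> idm (dm f)) = g \<cdot> (Ev (cd f) (dm g) \<cdot> (idm (Ih (cd f) (dm g)) \<otimes> f))"
  using lcd2[rule_format, OF ar_hom ar_hom] by (rule conjunct2)
lemma coev_hom: "X \<in> Ob \<Longrightarrow> Y \<in> Ob \<Longrightarrow> Coev X Y \<in> Hom Y (Ih X (Y \<odot> X))"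
  using lcd3 by simp
lemma ar_coev[simp]: "X \<in> Ob \<Longrightarrow> Y \<in> Ob \<Longrightarrow> ar (Coev X Y)"
  and dm_coev[simp]: "X \<in> Ob \<Longrightarrow> Y \<in> Ob \<Longrightarrow> dm (Coev X Y) = Y"
  and cd_coev[simp]: "X \<in> Ob \<Longrightarrow> Y \<in> Ob \<Longrightarrow> cd (Coev X Y) = Ih X (Y \<odot> X)"
  using coev_hom hom_iff by blast+
lemma coev_tri: "X \<in> Ob \<Longrightarrow> Y \<in> Ob \<Longrightarrow> Ev X (Y \<odot> X) \<cdot> (Coev X Y \<otimes> idm X) = idm (Y \<odot> X)"
  using lcd3 by simp

lemma To_ob[simp]: "X \<in> Ob \<Longrightarrow> To X \<in> Ob" using bm1 by simp
lemma Tm_id[simp]: "X \<in> Ob \<Longrightarrow> Tm (idm X) = idm (To X)" using bm1 by simp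
lemma Tm_hom: "f \<in> Hom a b \<Longrightarrow> Tm f \<in> Hom (To a) (To b)" using bm2 by simp
lemma ar_Tm[simp]: "ar f \<Longrightarrow> ar (Tm f)" and dm_Tm[simp]: "ar f \<Longrightarrow> dm (Tm f) = To (dm f)"
  and cd_Tm[simp]: "ar f \<Longrightarrow> cd (Tm f) = To (cd f)"
  using Tm_hom[OF ar_hom] hom_iff by blast+
lemma Tm_comp[simp]: "ar f \<Longrightarrow> ar g \<Longrightarrow> dm g = cd f \<Longrightarrow> Tm (g \<cdot> f) = Tm g \<cdot> Tm f"
proof -
  assume a: "ar f" "ar g" "dm g = cd f"
  have "f \<in> Hom (dm f) (cd f)" "g \<in> Hom (cd f) (cd g)" using a ar_hom by metis+
  from bm3[rule_format, OF this] show ?thesis by simp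
qed
lemma mu_hom: "X \<in> Ob \<Longrightarrow> Mu X \<in> Hom (To (To X)) (To X)" using bm4 by simp
lemma eta_hom: "X \<in> Ob \<Longrightarrow> Eta X \<in> Hom X (To X)" using bm4 by simp
lemma ar_mu[simp]: "X \<in> Ob \<Longrightarrow> ar (Mu X)" and dm_mu[simp]: "X \<in> Ob \<Longrightarrow> dm (Mu X) = To (To X)"
  and cd_mu[simp]: "X \<in> Ob \<Longrightarrow> cd (Mu X) = To X"
  using mu_hom hom_iff by blast+
lemma ar_eta[simp]: "X \<in> Ob \<Longrightarrow> ar (Eta X)" and dm_eta[simp]: "X \<in> Ob \<Longrightarrow> dm (Eta X) = X"
  and cd_eta[simp]: "X \<in> Ob \<Longrightarrow> cd (Eta X) = To X"
  using eta_hom hom_iff by blast+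
lemma mu_nat: "ar f \<Longrightarrow> Mu (cd f) \<cdot> Tm (Tm f) = Tm f \<cdot> Mu (dm f)"
  using bm5[rule_format, OF ar_hom] by (rule conjunct1)
lemma eta_nat: "ar f \<Longrightarrow> Eta (cd f) \<cdot> f = Tm f \<cdot> Eta (dm f)"
  using bm5[rule_format, OF ar_hom] by (rule conjunct2)
lemma mu_assoc: "X \<in> Ob \<Longrightarrow> Mu X \<cdot> Tm (Mu X) = Mu X \<cdot> Mu (To X)"
  using bm6 by simp
lemma mu_eta1[simp]: "X \<in> Ob \<Longrightarrow> Mu X \<cdot> Eta (To X) = idm (To X)"
  and mu_eta2[simp]: "X \<in> Ob \<Longrightarrow> Mu X \<cdot> Tm (Eta X) = idm (To X)"
  using bm6 by simp+
lemma t2_hom: "X \<in> Ob \<Longrightarrow> Y \<in> Ob \<Longrightarrow> T2 X Y \<in> Hom (To (X \<odot> Y)) (To X \<odot> To Y)"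
  using bm7 by simp
lemma ar_t2[simp]: "X \<in> Ob \<Longrightarrow> Y \<in> Ob \<Longrightarrow> ar (T2 X Y)"
  and dm_t2[simp]: "X \<in> Ob \<Longrightarrow> Y \<in> Ob \<Longrightarrow> dm (T2 X Y) = To (X \<odot> Y)"
  and cd_t2[simp]: "X \<in> Ob \<Longrightarrow> Y \<in> Ob \<Longrightarrow> cd (T2 X Y) = To X \<odot> To Y"
  using t2_hom hom_iff by blast+
lemma t2_nat: "ar f \<Longrightarrow> ar g \<Longrightarrow> T2 (cd f) (cd g) \<cdot> Tm (f \<otimes> g) = (Tm f \<otimes> Tm g) \<cdot> T2 (dm f) (dm g)"
  using bm9[rule_format, OF ar_hom ar_hom] .
lemma t2_mu: "X \<in> Ob \<Longrightarrow> Y \<in> Ob \<Longrightarrow> T2 X Y \<cdot> Mu (X \<odot> Y) = (Mu X \<otimes> Mu Y) \<cdot> (T2 (To X) (To Y) \<cdot> Tm (T2 X Y))"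
  using bm12 by simp
lemma t2_eta: "X \<in> Ob \<Longrightarrow> Y \<in> Ob \<Longrightarrow> T2 X Y \<cdot> Eta (X \<odot> Y) = Eta X \<otimes> Eta Y"
  using bm12 by simp

end

context hs begin

lemma mg1: "ar f \<Longrightarrow> ar f' \<Longrightarrow> ar g \<Longrightarrow> ar g' \<Longrightarrow> dm g = cd f \<Longrightarrow> dm g' = cd f' \<Longrightarrow>
  (g \<otimes> g') \<cdot> (f \<otimes> f') = (g \<cdot> f) \<otimes> (g' \<cdot> f')"
  by (rule interchange)
lemma mg2: "ar f \<Longrightarrow> ar f' \<Longrightarrow> ar g \<Longrightarrow> ar g' \<Longrightarrow> dm g = cd f \<Longrightarrow> dm g' = cd f' \<Longrightarrow>
  ar k \<Longrightarrow> dm f \<odot> dm f' = cd k \<Longrightarrow>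
  (g \<otimes> g') \<cdot> ((f \<otimes> f') \<cdot> k) = ((g \<cdot> f) \<otimes> (g' \<cdot> f')) \<cdot> k"
  by (simp flip: assoc add: interchange)

lemma cont: "a \<cdot> b = c \<Longrightarrow> ar a \<Longrightarrow> ar b \<Longrightarrow> dm a = cd b \<Longrightarrow> ar k \<Longrightarrow> dm b = cd k \<Longrightarrow>
  a \<cdot> (b \<cdot> k) = c \<cdot> k"
  by (simp flip: assoc)

lemma ihm_id[simp]: "X \<in> Ob \<Longrightarrow> Y \<in> Ob \<Longrightarrow> Ihm (idm X) (idm Y) = idm (Ih X Y)"
  apply (rule ev_uniq[of X Y])
  using ihm_ev[of "idm X" "idm Y"] by simp_all

lemma ihm_comp: assumes "ar f" "ar g" "ar f'" "ar g'" "cd f = dm f'" "dm g = cd g'"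
  shows "Ihm f g \<cdot> Ihm f' g' = Ihm (f' \<cdot> f) (g \<cdot> g')"
proof (rule ev_uniq[of "dm f" "cd g"])
  have e1: "Ev (dm f) (cd g) \<cdot> (Ihm f g \<otimes> idm (dm f)) = g \<cdot> (Ev (cd f) (dm g) \<cdot> (idm (Ih (cd f) (dm g)) \<otimes> f))"
    using ihm_ev assms by simp
  have e2: "Ev (dm f') (cd g') \<cdot> (Ihm f' g' \<otimes> idm (dm f')) = g' \<cdot> (Ev (cd f') (dm g') \<cdot> (idm (Ih (cd f') (dm g')) \<otimes> f'))"
    using ihm_ev assms by simp
  have e3: "Ev (dm f) (cd (g \<cdot> g')) \<cdot> (Ihm (f' \<cdot> f) (g \<cdot> g') \<otimes> idm (dm f)) = (g \<cdot> g') \<cdot> (Ev (cd f') (dm g') \<cdot> (idm (Ih (cd f') (dm g')) \<otimes> (f' \<cdot> f)))"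
    using ihm_ev[of "f' \<cdot> f" "g \<cdot> g'"] assms by simp
  have "Ev (dm f) (cd g) \<cdot> ((Ihm f g \<cdot> Ihm f' g') \<otimes> idm (dm f))
      = Ev (dm f) (cd g) \<cdot> ((Ihm f g \<otimes> idm (dm f)) \<cdot> (Ihm f' g' \<otimes> idm (dm f)))"
    using assms by (simp add: mg1 mg2)
  also have "\<dots> = g \<cdot> (Ev (cd f) (dm g) \<cdot> ((idm (Ih (cd f) (dm g)) \<otimes> f) \<cdot> (Ihm f' g' \<otimes> idm (dm f))))"
    using assms by (simp add: cont[OF e1])
  also have "\<dots> = g \<cdot> (Ev (dm f') (cd g') \<cdot> ((Ihm f' g' \<otimes> idm (dm f')) \<cdot> (idm (Ih (cd f') (dm g')) \<otimes> f)))"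
    using assms by (simp add: mg1 mg2)
  also have "\<dots> = g \<cdot> g' \<cdot> (Ev (cd f') (dm g') \<cdot> ((idm (Ih (cd f') (dm g')) \<otimes> f') \<cdot> (idm (Ih (cd f') (dm g')) \<otimes> f)))"
    using assms by (simp add: cont[OF e2])
  finally show "Ev (dm f) (cd g) \<cdot> ((Ihm f g \<cdot> Ihm f' g') \<otimes> idm (dm f)) = Ev (dm f) (cd g) \<cdot> (Ihm (f' \<cdot> f) (g \<cdot> g') \<otimes> idm (dm f))"
    using e3 assms by (simp add: mg1 mg2)
qed (use assms in simp_all)

lemma evnat: "X \<in> Ob \<Longrightarrow> ar g \<Longrightarrow> Ev X (cd g) \<cdot> (Ihm (idm X) g \<otimes> idm X) = g \<cdot> Ev X (dm g)"
  using ihm_ev[of "idm X" g] by simp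

lemma dinat: "ar f \<Longrightarrow> Y \<in> Ob \<Longrightarrow> Ev (cd f) Y \<cdot> (idm (Ih (cd f) Y) \<otimes> f) = Ev (dm f) Y \<cdot> (Ihm f (idm Y) \<otimes> idm (dm f))"
  using ihm_ev[of f "idm Y"] by simp

lemma t2n: "ar f \<Longrightarrow> ar g \<Longrightarrow> cd f = b \<Longrightarrow> cd g = d \<Longrightarrow> dm f = a \<Longrightarrow> dm g = c \<Longrightarrow>
  T2 b d \<cdot> Tm (f \<otimes> g) = (Tm f \<otimes> Tm g) \<cdot> T2 a c"
  using t2_nat by blast
lemma mun: "ar f \<Longrightarrow> cd f = b \<Longrightarrow> dm f = a \<Longrightarrow> Mu b \<cdot> Tm (Tm f) = Tm f \<cdot> Mu a"
  using mu_nat by blast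
lemma etan: "ar f \<Longrightarrow> cd f = b \<Longrightarrow> dm f = a \<Longrightarrow> Eta b \<cdot> f = Tm f \<cdot> Eta a"
  using eta_nat by blast
lemma evn: "X \<in> Ob \<Longrightarrow> ar g \<Longrightarrow> cd g = Y' \<Longrightarrow> dm g = Y \<Longrightarrow> Ev X Y' \<cdot> (Ihm (idm X) g \<otimes> idm X) = g \<cdot> Ev X Y"
  using evnat by blast
lemma din: "ar f \<Longrightarrow> Y \<in> Ob \<Longrightarrow> cd f = X \<Longrightarrow> dm f = X' \<Longrightarrow> Ev X Y \<cdot> (idm (Ih X Y) \<otimes> f) = Ev X' Y \<cdot> (Ihm f (idm Y) \<otimes> idm X')"
  using dinat by blast
lemma ihe: "ar f \<Longrightarrow> ar g \<Longrightarrow> dm f = X' \<Longrightarrow> cd g = Y' \<Longrightarrow> cd f = X \<Longrightarrow> dm g = Y \<Longrightarrow>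
   Ev X' Y' \<cdot> (Ihm f g \<otimes> idm X') = g \<cdot> (Ev X Y \<cdot> (idm (Ih X Y) \<otimes> f))"
  using ihm_ev by blast

lemma em_ob_iff: "(M, r) \<in> em_ob C T \<longleftrightarrow> M \<in> Ob \<and> ar r \<and> dm r = To M \<and> cd r = M \<and> r \<cdot> Tm r = r \<cdot> Mu M \<and> r \<cdot> Eta M = idm M"
  unfolding em_ob_def using hom_iff by auto

lemma EM_ob[simp]: "c_ob (EM C T) = em_ob C T" unfolding EM_def by simp
lemma EM_comp[simp]: "c_comp (EM C T) = c_comp C" unfolding EM_def by simp
lemma EM_tm[simp]: "c_tens_m (EM C T) = c_tens_m C" unfolding EM_def by simp
lemma EM_id[simp]: "c_id (EM C T) (M, r) = idm M" unfolding EM_def by simp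
lemma EM_to[simp]: "c_tens_o (EM C T) (M, r) (N, s) = (M \<odot> N, (r \<otimes> s) \<cdot> T2 M N)" unfolding EM_def by simp
lemma EM_hom[simp]: "f \<in> c_hom (EM C T) (M, r) (N, s) \<longleftrightarrow> (M, r) \<in> em_ob C T \<and> (N, s) \<in> em_ob C T \<and>
   ar f \<and> dm f = M \<and> cd f = N \<and> s \<cdot> Tm f = f \<cdot> r"
  unfolding EM_def using hom_iff by auto

definition modl :: "'o \<Rightarrow> 'm \<Rightarrow> bool" where "modl M r \<longleftrightarrow> (M, r) \<in> em_ob C T"

lemma modlD: assumes "modl M r" shows "M \<in> Ob" "ar r" "dm r = To M" "cd r = M" "r \<cdot> Tm r = r \<cdot> Mu M" "r \<cdot> Eta M = idm M"
  using assms unfolding modl_def em_ob_iff by auto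

lemma free_modl: "X \<in> Ob \<Longrightarrow> modl (To X) (Mu X)"
  unfolding modl_def em_ob_iff by (simp add: mu_assoc)

lemma tens_modl: assumes "modl M r" "modl N s" shows "modl (M \<odot> N) ((r \<otimes> s) \<cdot> T2 M N)"
proof -
  note m = modlD[OF assms(1)] modlD[OF assms(2)]
  have "(r \<otimes> s) \<cdot> T2 M N \<cdot> Tm ((r \<otimes> s) \<cdot> T2 M N) = (r \<otimes> s) \<cdot> T2 M N \<cdot> Tm (r \<otimes> s) \<cdot> Tm (T2 M N)"
    using m by simp
  also have "\<dots> = (r \<otimes> s) \<cdot> (Tm r \<otimes> Tm s) \<cdot> T2 (To M) (To N) \<cdot> Tm (T2 M N)"
    using m by (simp add: cont[OF t2n])
  also have "\<dots> = ((r \<cdot> Tm r) \<otimes> (s \<cdot> Tm s)) \<cdot> T2 (To M) (To N) \<cdot> Tm (T2 M N)"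
    using m by (simp add: mg1 mg2)
  also have "\<dots> = ((r \<cdot> Mu M) \<otimes> (s \<cdot> Mu N)) \<cdot> T2 (To M) (To N) \<cdot> Tm (T2 M N)"
    using m by simp
  also have "\<dots> = (r \<otimes> s) \<cdot> (Mu M \<otimes> Mu N) \<cdot> T2 (To M) (To N) \<cdot> Tm (T2 M N)"
    using m by (simp add: mg1 mg2)
  also have "\<dots> = (r \<otimes> s) \<cdot> T2 M N \<cdot> Mu (M \<odot> N)"
    using m by (simp add: t2_mu)
  finally have a: "(r \<otimes> s) \<cdot> T2 M N \<cdot> Tm ((r \<otimes> s) \<cdot> T2 M N) = (r \<otimes> s) \<cdot> T2 M N \<cdot> Mu (M \<odot> N)" .
  have b: "((r \<otimes> s) \<cdot> T2 M N) \<cdot> Eta (M \<odot> N) = idm (M \<odot> N)"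
    using m by (simp add: t2_eta mg1)
  show ?thesis unfolding modl_def em_ob_iff using m a b by simp
qed

end

context hs begin

definition Hf :: "'o \<Rightarrow> 'o \<Rightarrow> 'm" where "Hf Y X = (idm (To Y) \<otimes> Mu X) \<cdot> T2 Y (To X)"

lemma Hf_ar[simp]: "Y \<in> Ob \<Longrightarrow> X \<in> Ob \<Longrightarrow> ar (Hf Y X)"
  and Hf_dm[simp]: "Y \<in> Ob \<Longrightarrow> X \<in> Ob \<Longrightarrow> dm (Hf Y X) = To (Y \<odot> To X)"
  and Hf_cd[simp]: "Y \<in> Ob \<Longrightarrow> X \<in> Ob \<Longrightarrow> cd (Hf Y X) = To Y \<odot> To X"
  unfolding Hf_def by simp_all

definition rinvP :: bool where
  "rinvP \<longleftrightarrow> (\<forall>Y\<in>Ob. \<forall>X\<in>Ob. \<exists>h. ar h \<and> dm h = To Y \<odot> X \<and> cd h = To (Y \<odot> To X) \<and> Hf Y X \<cdot> h = idm (To Y) \<otimes> Eta X)"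

lemma cont3: "a \<cdot> b \<cdot> c = d \<Longrightarrow> ar a \<Longrightarrow> ar b \<Longrightarrow> ar c \<Longrightarrow> dm a = cd b \<Longrightarrow> dm b = cd c \<Longrightarrow> ar k \<Longrightarrow> dm c = cd k \<Longrightarrow>
  a \<cdot> b \<cdot> c \<cdot> k = d \<cdot> k"
  by (simp flip: assoc)

definition kk :: "'o \<Rightarrow> 'o \<Rightarrow> 'm \<Rightarrow> 'm" where "kk B M r = (idm (To B) \<otimes> r) \<cdot> T2 B M"

lemma kk_ar[simp]: "B \<in> Ob \<Longrightarrow> modl M r \<Longrightarrow> ar (kk B M r)"
  and kk_dm[simp]: "B \<in> Ob \<Longrightarrow> modl M r \<Longrightarrow> dm (kk B M r) = To (B \<odot> M)"
  and kk_cd[simp]: "B \<in> Ob \<Longrightarrow> modl M r \<Longrightarrow> cd (kk B M r) = To B \<odot> M"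
  unfolding kk_def using modlD by simp_all

lemma L0: assumes P: rinvP and B: "B \<in> Ob" and m: "modl M r"
  shows "\<exists>\<Omega>. ar \<Omega> \<and> dm \<Omega> = To B \<odot> M \<and> cd \<Omega> = To (B \<odot> M) \<and> kk B M r \<cdot> \<Omega> = idm (To B \<odot> M)"
proof -
  note mm = modlD[OF m]
  obtain h where h: "ar h" "dm h = To B \<odot> M" "cd h = To (B \<odot> To M)" "Hf B M \<cdot> h = idm (To B) \<otimes> Eta M"
    using P B mm unfolding rinvP_def by blast
  define \<Omega> where "\<Omega> = Tm (idm B \<otimes> r) \<cdot> h"
  have o: "ar \<Omega>" "dm \<Omega> = To B \<odot> M" "cd \<Omega> = To (B \<odot> M)" unfolding \<Omega>_def using h mm B by simp_all
  have "kk B M r \<cdot> \<Omega> = (idm (To B) \<otimes> r) \<cdot> (Tm (idm B) \<otimes> Tm r) \<cdot> T2 B (To M) \<cdot> h"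
    unfolding kk_def \<Omega>_def using h mm B by (simp add: cont[OF t2n])
  also have "\<dots> = (idm (To B) \<otimes> (r \<cdot> Tm r)) \<cdot> T2 B (To M) \<cdot> h"
    using h mm B by (simp add: mg1 mg2)
  also have "\<dots> = (idm (To B) \<otimes> r) \<cdot> Hf B M \<cdot> h"
    unfolding Hf_def using h mm B by (simp add: mg1 mg2)
  also have "\<dots> = idm (To B) \<otimes> (r \<cdot> Eta M)"
    using h mm B by (simp add: mg1 mg2)
  also have "\<dots> = idm (To B \<odot> M)" using mm B by simp
  finally show ?thesis using o by blast
qed

lemma canc: assumes P: rinvP and B: "B \<in> Ob" and m: "modl M r"
  and a: "ar \<psi>1" "ar \<psi>2" "dm \<psi>1 = To B \<odot> M" "dm \<psi>2 = To B \<odot> M" "cd \<psi>1 = cd \<psi>2"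
  and e: "\<psi>1 \<cdot> kk B M r = \<psi>2 \<cdot> kk B M r"
  shows "\<psi>1 = \<psi>2"
proof -
  obtain \<Omega> where o: "ar \<Omega>" "dm \<Omega> = To B \<odot> M" "cd \<Omega> = To (B \<odot> M)" "kk B M r \<cdot> \<Omega> = idm (To B \<odot> M)"
    using L0[OF P B m] by blast
  have "\<psi>1 = \<psi>1 \<cdot> kk B M r \<cdot> \<Omega>" using o a B m by simp
  also have "\<dots> = (\<psi>1 \<cdot> kk B M r) \<cdot> \<Omega>" using o a B m modlD[OF m] by simp
  also have "\<dots> = (\<psi>2 \<cdot> kk B M r) \<cdot> \<Omega>" by (simp only: e)
  also have "\<dots> = \<psi>2 \<cdot> kk B M r \<cdot> \<Omega>" using o a B m modlD[OF m] by simp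
  also have "\<dots> = \<psi>2" using o a B m by simp
  finally show ?thesis .
qed

lemma cancT: assumes P: rinvP and B: "B \<in> Ob" and m: "modl M r"
  and a: "ar \<psi>1" "ar \<psi>2" "dm \<psi>1 = To (To B \<odot> M)" "dm \<psi>2 = To (To B \<odot> M)" "cd \<psi>1 = cd \<psi>2"
  and e: "\<psi>1 \<cdot> Tm (kk B M r) = \<psi>2 \<cdot> Tm (kk B M r)"
  shows "\<psi>1 = \<psi>2"
proof -
  obtain \<Omega> where o: "ar \<Omega>" "dm \<Omega> = To B \<odot> M" "cd \<Omega> = To (B \<odot> M)" "kk B M r \<cdot> \<Omega> = idm (To B \<odot> M)"
    using L0[OF P B m] by blast
  have t: "Tm (kk B M r) \<cdot> Tm \<Omega> = idm (To (To B \<odot> M))"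
    using o B m modlD[OF m] by (simp flip: Tm_comp)
  have "\<psi>1 = \<psi>1 \<cdot> Tm (kk B M r) \<cdot> Tm \<Omega>" using o a B m t by simp
  also have "\<dots> = (\<psi>1 \<cdot> Tm (kk B M r)) \<cdot> Tm \<Omega>" using o a B m modlD[OF m] by simp
  also have "\<dots> = (\<psi>2 \<cdot> Tm (kk B M r)) \<cdot> Tm \<Omega>" by (simp only: e)
  also have "\<dots> = \<psi>2 \<cdot> Tm (kk B M r) \<cdot> Tm \<Omega>" using o a B m modlD[OF m] by simp
  also have "\<dots> = \<psi>2" using o a B m t by simp
  finally show ?thesis .
qed

context fixes s assumes AP: "left_antipode C L T s"
begin
lemma ap_hom: "X \<in> Ob \<Longrightarrow> Y \<in> Ob \<Longrightarrow> s X Y \<in> Hom (To (Ih (To X) Y)) (Ih X (To Y))"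
  using AP unfolding left_antipode_def by blast
lemma ap_ar[simp]: "X \<in> Ob \<Longrightarrow> Y \<in> Ob \<Longrightarrow> ar (s X Y)"
  and ap_dm[simp]: "X \<in> Ob \<Longrightarrow> Y \<in> Ob \<Longrightarrow> dm (s X Y) = To (Ih (To X) Y)"
  and ap_cd[simp]: "X \<in> Ob \<Longrightarrow> Y \<in> Ob \<Longrightarrow> cd (s X Y) = Ih X (To Y)"
  using ap_hom hom_iff by blast+
lemma ap_nat: "ar f \<Longrightarrow> ar g \<Longrightarrow> dm f = X' \<Longrightarrow> cd f = X \<Longrightarrow> dm g = Y \<Longrightarrow> cd g = Y' \<Longrightarrow>
   s X' Y' \<cdot> Tm (Ihm (Tm f) g) = Ihm f (Tm g) \<cdot> s X Y"
proof -
  assume a: "ar f" "ar g" "dm f = X'" "cd f = X" "dm g = Y" "cd g = Y'"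
  have "\<forall>X X' Y Y' f g. f \<in> Hom X' X \<longrightarrow> g \<in> Hom Y Y' \<longrightarrow>
        s X' Y' \<cdot> Tm (Ihm (Tm f) g) = Ihm f (Tm g) \<cdot> s X Y"
    using AP unfolding left_antipode_def by blast
  thus ?thesis using a ar_hom by blast
qed
lemma ap1: "X \<in> Ob \<Longrightarrow> Y \<in> Ob \<Longrightarrow> Tm (Ev X Y \<cdot> (Ihm (Eta X) (idm Y) \<otimes> idm X))
        = Ev (To X) (To Y) \<cdot> ((s (To X) Y \<cdot> Tm (Ihm (Mu X) (idm Y))) \<otimes> idm (To X)) \<cdot> T2 (Ih (To X) Y) X"
  using AP unfolding left_antipode_def by blast
lemma ap2: "X \<in> Ob \<Longrightarrow> Y \<in> Ob \<Longrightarrow> Ihm (idm X) (idm (To Y) \<otimes> Eta X) \<cdot> Coev X (To Y)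
        = Ihm (idm X) ((idm (To Y) \<otimes> Mu X) \<cdot> T2 Y (To X)) \<cdot> s X (Y \<odot> To X) \<cdot> Tm (Coev (To X) Y)"
  using AP unfolding left_antipode_def by blast

lemma ap_rinvP: "rinvP"
  unfolding rinvP_def
proof (intro ballI)
  fix Y X assume YX: "Y \<in> Ob" "X \<in> Ob"
  define \<sigma> where "\<sigma> = s X (Y \<odot> To X) \<cdot> Tm (Coev (To X) Y)"
  have s1: "ar \<sigma>" "dm \<sigma> = To Y" "cd \<sigma> = Ih X (To (Y \<odot> To X))" unfolding \<sigma>_def using YX by simp_all
  define h where "h = Ev X (To (Y \<odot> To X)) \<cdot> (\<sigma> \<otimes> idm X)"
  have h1: "ar h" "dm h = To Y \<odot> X" "cd h = To (Y \<odot> To X)" unfolding h_def using YX s1 by simp_all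
  have e2: "Ihm (idm X) (idm (To Y) \<otimes> Eta X) \<cdot> Coev X (To Y) = Ihm (idm X) (Hf Y X) \<cdot> \<sigma>"
    unfolding \<sigma>_def Hf_def using ap2 YX by simp
  have "Hf Y X \<cdot> h = Ev X (To Y \<odot> To X) \<cdot> (Ihm (idm X) (Hf Y X) \<otimes> idm X) \<cdot> (\<sigma> \<otimes> idm X)"
    unfolding h_def using YX s1 by (simp add: cont[OF evn])
  also have "\<dots> = Ev X (To Y \<odot> To X) \<cdot> ((Ihm (idm X) (Hf Y X) \<cdot> \<sigma>) \<otimes> idm X)"
    using YX s1 by (simp add: mg1 mg2)
  also have "\<dots> = Ev X (To Y \<odot> To X) \<cdot> ((Ihm (idm X) (idm (To Y) \<otimes> Eta X) \<cdot> Coev X (To Y)) \<otimes> idm X)"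
    using e2 by simp
  also have "\<dots> = Ev X (To Y \<odot> To X) \<cdot> (Ihm (idm X) (idm (To Y) \<otimes> Eta X) \<otimes> idm X) \<cdot> (Coev X (To Y) \<otimes> idm X)"
    using YX by (simp add: mg1 mg2)
  also have "\<dots> = (idm (To Y) \<otimes> Eta X) \<cdot> Ev X (To Y \<odot> X) \<cdot> (Coev X (To Y) \<otimes> idm X)"
    using YX by (simp add: cont[OF evn])
  also have "\<dots> = idm (To Y) \<otimes> Eta X"
    using YX by (simp add: coev_tri)
  finally show "\<exists>h. ar h \<and> dm h = To Y \<odot> X \<and> cd h = To (Y \<odot> To X) \<and> Hf Y X \<cdot> h = idm (To Y) \<otimes> Eta X"
    using h1 by blast
qed


abbreviation act where "act M r N t \<equiv> ihom_action C L T s M r N t"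
lemma act_eq: "act M r N t = Ihm (idm M) t \<cdot> s M N \<cdot> Tm (Ihm r (idm N))"
  unfolding ihom_action_def by simp

lemma act_typ: assumes "modl M r" "modl N t"
  shows "ar (act M r N t)" "dm (act M r N t) = To (Ih M N)" "cd (act M r N t) = Ih M N"
  using modlD[OF assms(1)] modlD[OF assms(2)] unfolding act_eq by simp_all

lemma evlin: assumes m1: "modl M r" and m2: "modl N t"
  shows "Ev M N \<cdot> (act M r N t \<otimes> r) \<cdot> T2 (Ih M N) M = t \<cdot> Tm (Ev M N)"
proof -
  note m = m1 m2 modlD[OF m1] modlD[OF m2]
  have n1: "Ihm r (idm (To N)) \<cdot> s M N = s (To M) N \<cdot> Tm (Ihm (Tm r) (idm N))"
    using ap_nat[of r "idm N" "To M" M N N] m by simp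
  have c0: "Ihm (Tm r) (idm N) \<cdot> Ihm r (idm N) = Ihm (Mu M) (idm N) \<cdot> Ihm r (idm N)"
    using m by (simp add: ihm_comp)
  have c1: "Tm (Ihm (Tm r) (idm N)) \<cdot> Tm (Ihm r (idm N)) = Tm (Ihm (Mu M) (idm N)) \<cdot> Tm (Ihm r (idm N))"
    using m c0 by (simp flip: Tm_comp)
  have c2: "Ihm (Eta M) (idm N) \<cdot> Ihm r (idm N) = idm (Ih M N)"
    using m by (simp add: ihm_comp)
  have F: "Ev M N \<cdot> (Ihm (Eta M) (idm N) \<otimes> idm M) \<cdot> (Ihm r (idm N) \<otimes> idm M) = Ev M N"
    using m c2 by (simp add: mg1 mg2)
  have A1: "Tm (Ev M N \<cdot> (Ihm (Eta M) (idm N) \<otimes> idm M))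
        = Ev (To M) (To N) \<cdot> ((s (To M) N \<cdot> Tm (Ihm (Mu M) (idm N))) \<otimes> idm (To M)) \<cdot> T2 (Ih (To M) N) M"
    using ap1 m by simp
  have "Ev M N \<cdot> (act M r N t \<otimes> r) \<cdot> T2 (Ih M N) M
      = Ev M N \<cdot> (Ihm (idm M) t \<otimes> idm M) \<cdot> ((s M N \<cdot> Tm (Ihm r (idm N))) \<otimes> r) \<cdot> T2 (Ih M N) M"
    unfolding act_eq using m by (simp add: mg1 mg2)
  also have "\<dots> = t \<cdot> Ev M (To N) \<cdot> ((s M N \<cdot> Tm (Ihm r (idm N))) \<otimes> r) \<cdot> T2 (Ih M N) M"
    using m by (simp add: cont[OF evn])
  also have "\<dots> = t \<cdot> Ev M (To N) \<cdot> (idm (Ih M (To N)) \<otimes> r) \<cdot> ((s M N \<cdot> Tm (Ihm r (idm N))) \<otimes> idm (To M)) \<cdot> T2 (Ih M N) M"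
    using m by (simp add: mg1 mg2)
  also have "\<dots> = t \<cdot> Ev (To M) (To N) \<cdot> (Ihm r (idm (To N)) \<otimes> idm (To M)) \<cdot> ((s M N \<cdot> Tm (Ihm r (idm N))) \<otimes> idm (To M)) \<cdot> T2 (Ih M N) M"
    using m by (simp add: cont[OF din])
  also have "\<dots> = t \<cdot> Ev (To M) (To N) \<cdot> ((Ihm r (idm (To N)) \<cdot> s M N \<cdot> Tm (Ihm r (idm N))) \<otimes> idm (To M)) \<cdot> T2 (Ih M N) M"
    using m by (simp add: mg1 mg2)
  also have "\<dots> = t \<cdot> Ev (To M) (To N) \<cdot> ((s (To M) N \<cdot> Tm (Ihm (Tm r) (idm N)) \<cdot> Tm (Ihm r (idm N))) \<otimes> idm (To M)) \<cdot> T2 (Ih M N) M"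
    using m by (simp add: cont[OF n1])
  also have "\<dots> = t \<cdot> Ev (To M) (To N) \<cdot> ((s (To M) N \<cdot> Tm (Ihm (Mu M) (idm N)) \<cdot> Tm (Ihm r (idm N))) \<otimes> idm (To M)) \<cdot> T2 (Ih M N) M"
    using m by (simp add: c1)
  also have "\<dots> = t \<cdot> Ev (To M) (To N) \<cdot> ((s (To M) N \<cdot> Tm (Ihm (Mu M) (idm N))) \<otimes> idm (To M)) \<cdot> (Tm (Ihm r (idm N)) \<otimes> idm (To M)) \<cdot> T2 (Ih M N) M"
    using m by (simp add: mg1 mg2)
  also have "\<dots> = t \<cdot> Ev (To M) (To N) \<cdot> ((s (To M) N \<cdot> Tm (Ihm (Mu M) (idm N))) \<otimes> idm (To M)) \<cdot> T2 (Ih (To M) N) M \<cdot> Tm (Ihm r (idm N) \<otimes> idm M)"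
    using m by (simp add: t2n cont[OF t2n])
  also have "\<dots> = t \<cdot> Tm (Ev M N \<cdot> (Ihm (Eta M) (idm N) \<otimes> idm M)) \<cdot> Tm (Ihm r (idm N) \<otimes> idm M)"
    using m by (simp add: cont3[OF A1[symmetric]])
  also have "\<dots> = t \<cdot> Tm (Ev M N \<cdot> (Ihm (Eta M) (idm N) \<otimes> idm M) \<cdot> (Ihm r (idm N) \<otimes> idm M))"
    using m by simp
  also have "\<dots> = t \<cdot> Tm (Ev M N)" by (simp only: F)
  finally show ?thesis .
qed

lemma act_unit: assumes m1: "modl M r" and m2: "modl N t"
  shows "act M r N t \<cdot> Eta (Ih M N) = idm (Ih M N)"
proof -
  note m = m1 m2 modlD[OF m1] modlD[OF m2] act_typ[OF m1 m2]
  have E: "Ev M N \<cdot> (act M r N t \<otimes> r) \<cdot> T2 (Ih M N) M = t \<cdot> Tm (Ev M N)" by (rule evlin[OF m1 m2])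
  have "Ev M N \<cdot> ((act M r N t \<cdot> Eta (Ih M N)) \<otimes> idm M) = Ev M N \<cdot> (act M r N t \<otimes> r) \<cdot> (Eta (Ih M N) \<otimes> Eta M)"
    using m by (simp add: mg1 mg2)
  also have "\<dots> = Ev M N \<cdot> (act M r N t \<otimes> r) \<cdot> T2 (Ih M N) M \<cdot> Eta (Ih M N \<odot> M)"
    using m by (simp add: t2_eta cont[OF t2_eta])
  also have "\<dots> = t \<cdot> Tm (Ev M N) \<cdot> Eta (Ih M N \<odot> M)"
    using m by (simp add: cont3[OF E])
  also have "\<dots> = t \<cdot> Eta N \<cdot> Ev M N"
    using m by (simp add: cont[OF etan] etan)
  also have "\<dots> = Ev M N \<cdot> (idm (Ih M N) \<otimes> idm M)"
    using m by (simp add: cont[OF modlD(6)[OF m2]])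
  finally have eq: "Ev M N \<cdot> ((act M r N t \<cdot> Eta (Ih M N)) \<otimes> idm M) = Ev M N \<cdot> (idm (Ih M N) \<otimes> idm M)" .
  show ?thesis by (rule ev_uniq[of M N]) (use eq m in simp_all)
qed

lemma act_assoc: assumes m1: "modl M r" and m2: "modl N t"
  shows "act M r N t \<cdot> Tm (act M r N t) = act M r N t \<cdot> Mu (Ih M N)"
proof -
  note m = m1 m2 modlD[OF m1] modlD[OF m2] act_typ[OF m1 m2]
  define a where "a = act M r N t"
  have ma: "ar a" "dm a = To (Ih M N)" "cd a = Ih M N" "Ih M N \<in> Ob" using m unfolding a_def by simp_all
  have E: "Ev M N \<cdot> (a \<otimes> r) \<cdot> T2 (Ih M N) M = t \<cdot> Tm (Ev M N)" unfolding a_def by (rule evlin[OF m1 m2])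
  have P: rinvP by (rule ap_rinvP)
  have b1: "Ev M N \<cdot> ((a \<cdot> Tm a) \<otimes> idm M) \<cdot> kk (To (Ih M N)) M r = t \<cdot> Tm (Ev M N) \<cdot> Tm (a \<otimes> idm M)"
  proof -
    have "Ev M N \<cdot> ((a \<cdot> Tm a) \<otimes> idm M) \<cdot> kk (To (Ih M N)) M r = Ev M N \<cdot> (a \<otimes> r) \<cdot> (Tm a \<otimes> Tm (idm M)) \<cdot> T2 (To (Ih M N)) M"
      unfolding kk_def using m ma by (simp add: mg1 mg2)
    also have "\<dots> = Ev M N \<cdot> (a \<otimes> r) \<cdot> T2 (Ih M N) M \<cdot> Tm (a \<otimes> idm M)"
      using m ma by (simp add: t2n cont[OF t2n])
    also have "\<dots> = t \<cdot> Tm (Ev M N) \<cdot> Tm (a \<otimes> idm M)"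
      using m ma by (simp add: cont3[OF E])
    finally show ?thesis .
  qed
  define X where "X = Ev M N \<cdot> ((a \<cdot> Mu (Ih M N)) \<otimes> r) \<cdot> T2 (To (Ih M N)) M"
  have X1: "ar X" "dm X = To (To (Ih M N) \<odot> M)" "cd X = N" unfolding X_def using m ma by simp_all
  have "X \<cdot> Tm (kk (Ih M N) M r) = Ev M N \<cdot> ((a \<cdot> Mu (Ih M N)) \<otimes> r) \<cdot> T2 (To (Ih M N)) M \<cdot> Tm (idm (To (Ih M N)) \<otimes> r) \<cdot> Tm (T2 (Ih M N) M)"
    unfolding X_def kk_def using m ma by simp
  also have "\<dots> = Ev M N \<cdot> ((a \<cdot> Mu (Ih M N)) \<otimes> r) \<cdot> (Tm (idm (To (Ih M N))) \<otimes> Tm r) \<cdot> T2 (To (Ih M N)) (To M) \<cdot> Tm (T2 (Ih M N) M)"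
    using m ma by (simp add: cont[OF t2n])
  also have "\<dots> = Ev M N \<cdot> ((a \<cdot> Mu (Ih M N)) \<otimes> (r \<cdot> Tm r)) \<cdot> T2 (To (Ih M N)) (To M) \<cdot> Tm (T2 (Ih M N) M)"
    using m ma by (simp add: mg1 mg2)
  also have "\<dots> = Ev M N \<cdot> (a \<otimes> r) \<cdot> (Mu (Ih M N) \<otimes> Mu M) \<cdot> T2 (To (Ih M N)) (To M) \<cdot> Tm (T2 (Ih M N) M)"
    using m ma by (simp add: mg1 mg2)
  also have "\<dots> = Ev M N \<cdot> (a \<otimes> r) \<cdot> T2 (Ih M N) M \<cdot> Mu ((Ih M N) \<odot> M)"
    using m ma by (simp add: t2_mu cont[OF t2_mu])
  also have "\<dots> = t \<cdot> Tm (Ev M N) \<cdot> Mu ((Ih M N) \<odot> M)"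
    using m ma by (simp add: cont3[OF E])
  also have "\<dots> = t \<cdot> Mu N \<cdot> Tm (Tm (Ev M N))"
    using m ma by (simp add: mun)
  also have "\<dots> = t \<cdot> Tm t \<cdot> Tm (Tm (Ev M N))"
    using m ma by (simp add: cont[OF modlD(5)[OF m2]])
  also have "\<dots> = t \<cdot> Tm (Ev M N \<cdot> (a \<otimes> r) \<cdot> T2 (Ih M N) M)"
    using m ma E[THEN arg_cong[where f=Tm]] by simp
  also have "\<dots> = t \<cdot> Tm (Ev M N \<cdot> (a \<otimes> idm M) \<cdot> kk (Ih M N) M r)"
    unfolding kk_def using m ma by (simp add: mg1 mg2)
  finally have X2: "X \<cdot> Tm (kk (Ih M N) M r) = (t \<cdot> Tm (Ev M N) \<cdot> Tm (a \<otimes> idm M)) \<cdot> Tm (kk (Ih M N) M r)"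
    using m ma m1 by simp
  have X3: "X = t \<cdot> Tm (Ev M N) \<cdot> Tm (a \<otimes> idm M)"
    by (rule cancT[OF P ma(4) m1]) (use X1 X2 m ma in simp_all)
  have b2: "Ev M N \<cdot> ((a \<cdot> Mu (Ih M N)) \<otimes> idm M) \<cdot> kk (To (Ih M N)) M r = X"
    unfolding X_def kk_def using m ma by (simp add: mg1 mg2)
  have "Ev M N \<cdot> ((a \<cdot> Tm a) \<otimes> idm M) = Ev M N \<cdot> ((a \<cdot> Mu (Ih M N)) \<otimes> idm M)"
    by (rule canc[where B="To (Ih M N)", OF P _ m1]) (use b1 b2 X3 m ma in simp_all)
  hence "a \<cdot> Tm a = a \<cdot> Mu (Ih M N)"
    by (rule ev_uniq[of M N, rotated -1]) (use m ma in simp_all)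
  thus ?thesis unfolding a_def .
qed

lemma act_univ: assumes m1: "modl M r" and m2: "modl N t" and m3: "modl B p"
  and f: "ar f" "dm f = B \<odot> M" "cd f = N" "t \<cdot> Tm f = f \<cdot> (p \<otimes> r) \<cdot> T2 B M"
  and g: "ar g" "dm g = B" "cd g = Ih M N" "Ev M N \<cdot> (g \<otimes> idm M) = f"
  shows "act M r N t \<cdot> Tm g = g \<cdot> p"
proof -
  note m = m1 m2 modlD[OF m1] modlD[OF m2] modlD[OF m3] act_typ[OF m1 m2]
  define a where "a = act M r N t"
  have ma: "ar a" "dm a = To (Ih M N)" "cd a = Ih M N" using m unfolding a_def by simp_all
  have E: "Ev M N \<cdot> (a \<otimes> r) \<cdot> T2 (Ih M N) M = t \<cdot> Tm (Ev M N)" unfolding a_def by (rule evlin[OF m1 m2])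
  have P: rinvP by (rule ap_rinvP)
  have "Ev M N \<cdot> ((a \<cdot> Tm g) \<otimes> idm M) \<cdot> kk B M r = Ev M N \<cdot> (a \<otimes> r) \<cdot> (Tm g \<otimes> Tm (idm M)) \<cdot> T2 B M"
    unfolding kk_def using m ma g by (simp add: mg1 mg2)
  also have "\<dots> = Ev M N \<cdot> (a \<otimes> r) \<cdot> T2 (Ih M N) M \<cdot> Tm (g \<otimes> idm M)"
    using m ma g by (simp add: t2n cont[OF t2n])
  also have "\<dots> = t \<cdot> Tm (Ev M N) \<cdot> Tm (g \<otimes> idm M)"
    using m ma g by (simp add: cont3[OF E])
  also have "\<dots> = t \<cdot> Tm f"
    unfolding g(4)[symmetric] using m ma g(1-3) by simp
  also have "\<dots> = Ev M N \<cdot> (g \<otimes> idm M) \<cdot> (p \<otimes> r) \<cdot> T2 B M"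
    using f(4) g(1-3) m by (simp add: cont[OF g(4)])
  also have "\<dots> = Ev M N \<cdot> ((g \<cdot> p) \<otimes> idm M) \<cdot> kk B M r"
    unfolding kk_def using m ma g by (simp add: mg1 mg2)
  finally have F: "Ev M N \<cdot> ((a \<cdot> Tm g) \<otimes> idm M) \<cdot> kk B M r = Ev M N \<cdot> ((g \<cdot> p) \<otimes> idm M) \<cdot> kk B M r" .
  have "Ev M N \<cdot> ((g \<cdot> p) \<otimes> idm M) = Ev M N \<cdot> ((a \<cdot> Tm g) \<otimes> idm M)"
    by (rule canc[OF P modlD(1)[OF m3] m1]) (use F[symmetric] m ma g in simp_all)
  hence "g \<cdot> p = a \<cdot> Tm g"
    by (rule ev_uniq[of M N, rotated -1]) (use m ma g in simp_all)
  thus ?thesis unfolding a_def by simp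
qed

lemma act_modl: assumes m1: "modl M r" and m2: "modl N t"
  shows "modl (Ih M N) (act M r N t)"
  unfolding modl_def em_ob_iff using act_typ[OF m1 m2] act_unit[OF m1 m2] act_assoc[OF m1 m2] modlD[OF m1] modlD[OF m2]
  by simp

lemma mor: assumes m1: "modl M r" and m2: "modl N t"
  shows "is_left_ihom (EM C T) (M, r) (N, t) (Ih M N, act M r N t) (Ev M N)"
  unfolding is_left_ihom_def
proof (intro conjI ballI)
  note m = m1 m2 modlD[OF m1] modlD[OF m2] act_typ[OF m1 m2]
  have am: "modl (Ih M N) (act M r N t)" by (rule act_modl[OF m1 m2])
  show "(Ih M N, act M r N t) \<in> c_ob (EM C T)" using am unfolding modl_def by simp
  have tm: "modl (Ih M N \<odot> M) ((act M r N t \<otimes> r) \<cdot> T2 (Ih M N) M)" by (rule tens_modl[OF am m1])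
  show "Ev M N \<in> c_hom (EM C T) (c_tens_o (EM C T) (Ih M N, act M r N t) (M, r)) (N, t)"
    using tm m2 m evlin[OF m1 m2] unfolding modl_def by simp
  fix A f assume A: "A \<in> c_ob (EM C T)" and f: "f \<in> c_hom (EM C T) (c_tens_o (EM C T) A (M, r)) (N, t)"
  obtain B p where Bp: "A = (B, p)" by (cases A)
  have m3: "modl B p" using A Bp unfolding modl_def by simp
  note mb = modlD[OF m3]
  have f1: "ar f" "dm f = B \<odot> M" "cd f = N" "t \<cdot> Tm f = f \<cdot> (p \<otimes> r) \<cdot> T2 B M"
    using f Bp by simp_all
  obtain g where g: "ar g" "dm g = B" "cd g = Ih M N" "Ev M N \<cdot> (g \<otimes> idm M) = f"
    using ev_ex[of M N f B] m mb f1 by auto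
  have lin: "act M r N t \<cdot> Tm g = g \<cdot> p" by (rule act_univ[OF m1 m2 m3 f1 g])
  show "\<exists>!g. g \<in> c_hom (EM C T) A (Ih M N, act M r N t) \<and> c_comp (EM C T) (Ev M N) (c_tens_m (EM C T) g (c_id (EM C T) (M, r))) = f"
  proof (rule ex1I[of _ g])
    show "g \<in> c_hom (EM C T) A (Ih M N, act M r N t) \<and> c_comp (EM C T) (Ev M N) (c_tens_m (EM C T) g (c_id (EM C T) (M, r))) = f"
      using Bp m3 am g lin unfolding modl_def by simp
  next
    fix g' assume "g' \<in> c_hom (EM C T) A (Ih M N, act M r N t) \<and> c_comp (EM C T) (Ev M N) (c_tens_m (EM C T) g' (c_id (EM C T) (M, r))) = f"
    hence g': "ar g'" "dm g' = B" "cd g' = Ih M N" "Ev M N \<cdot> (g' \<otimes> idm M) = f" using Bp by simp_all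
    show "g' = g" by (rule ev_uniq[of M N]) (use g g' m in simp_all)
  qed
qed

lemma ap_ii: "\<exists>H e. left_closed_via (EM C T) H e \<and> forgetful_left_closed C L T H e"
proof (intro exI conjI)
  let ?H = "\<lambda>P Q. (Ih (fst P) (fst Q), act (fst P) (snd P) (fst Q) (snd Q))"
  let ?e = "\<lambda>P Q. Ev (fst P) (fst Q)"
  show "left_closed_via (EM C T) ?H ?e"
    unfolding left_closed_via_def
  proof (intro ballI)
    fix X Y assume X: "X \<in> c_ob (EM C T)" and Y: "Y \<in> c_ob (EM C T)"
    obtain M r where "X = (M, r)" by (cases X)
    moreover obtain N t where "Y = (N, t)" by (cases Y)
    ultimately show "is_left_ihom (EM C T) X Y (?H X Y) (?e X Y)"
      using mor X Y unfolding modl_def by auto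
  qed
  show "forgetful_left_closed C L T ?H ?e"
    unfolding forgetful_left_closed_def
  proof (intro allI impI)
    fix M r N t assume m1: "(M, r) \<in> em_ob C T" and m2: "(N, t) \<in> em_ob C T"
    hence ob: "M \<in> Ob" "N \<in> Ob" using em_ob_iff by auto
    show "\<exists>\<phi>. \<phi> \<in> Hom (fst (?H (M, r) (N, t))) (Ih M N) \<and> Ev M N \<cdot> (\<phi> \<otimes> idm M) = ?e (M, r) (N, t) \<and>
            iso C \<phi> (fst (?H (M, r) (N, t))) (Ih M N)"
      by (rule exI[of _ "idm (Ih M N)"]) (use ob id_hom in \<open>simp add: iso_def hom_iff\<close>)
  qed
qed
end

end

context hs begin

lemma free_uniq: assumes mN: "modl N t" and X: "X \<in> Ob"
  and u: "ar u1" "ar u2" "dm u1 = To X" "dm u2 = To X" "cd u1 = N" "cd u2 = N"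
  and l: "t \<cdot> Tm u1 = u1 \<cdot> Mu X" "t \<cdot> Tm u2 = u2 \<cdot> Mu X"
  and e: "u1 \<cdot> Eta X = u2 \<cdot> Eta X"
  shows "u1 = u2"
proof -
  note m = modlD[OF mN]
  have "u1 = u1 \<cdot> Mu X \<cdot> Tm (Eta X)" using u X by simp
  also have "\<dots> = t \<cdot> Tm (u1 \<cdot> Eta X)" using u X m by (simp del: mu_eta2 add: cont[OF l(1)[symmetric]])
  also have "\<dots> = t \<cdot> Tm (u2 \<cdot> Eta X)" using e by simp
  also have "\<dots> = u2 \<cdot> Mu X \<cdot> Tm (Eta X)" using u X m by (simp del: mu_eta2 add: cont[OF l(2)[symmetric]])
  also have "\<dots> = u2" using u X by simp
  finally show ?thesis .
qed

lemma Hf_lin: assumes "X \<in> Ob" "Y \<in> Ob"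
  shows "(Mu X \<otimes> Mu Y) \<cdot> T2 (To X) (To Y) \<cdot> Tm (Hf X Y) = Hf X Y \<cdot> Mu (X \<odot> To Y)"
proof -
  have "(Mu X \<otimes> Mu Y) \<cdot> T2 (To X) (To Y) \<cdot> Tm (Hf X Y) = (Mu X \<otimes> Mu Y) \<cdot> (Tm (idm (To X)) \<otimes> Tm (Mu Y)) \<cdot> T2 (To X) (To (To Y)) \<cdot> Tm (T2 X (To Y))"
    unfolding Hf_def using assms by (simp add: cont[OF t2n])
  also have "\<dots> = (Mu X \<otimes> (Mu Y \<cdot> Tm (Mu Y))) \<cdot> T2 (To X) (To (To Y)) \<cdot> Tm (T2 X (To Y))"
    using assms by (simp add: mg1 mg2)
  also have "\<dots> = (idm (To X) \<otimes> Mu Y) \<cdot> (Mu X \<otimes> Mu (To Y)) \<cdot> T2 (To X) (To (To Y)) \<cdot> Tm (T2 X (To Y))"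
    using assms by (simp add: mg1 mg2 mu_assoc)
  also have "\<dots> = Hf X Y \<cdot> Mu (X \<odot> To Y)"
    unfolding Hf_def using assms by (simp add: t2_mu cont[OF t2_mu])
  finally show ?thesis .
qed

lemma Hf_eta: assumes "X \<in> Ob" "Y \<in> Ob"
  shows "Hf X Y \<cdot> Eta (X \<odot> To Y) = Eta X \<otimes> idm (To Y)"
  unfolding Hf_def using assms by (simp add: t2_eta cont[OF t2_eta] mg1)

context fixes H e assumes LV: "left_closed_via (EM C T) H e" and FL: "forgetful_left_closed C L T H e"
begin

lemma Hmod: "modl M r \<Longrightarrow> modl N t \<Longrightarrow> modl (fst (H (M, r) (N, t))) (snd (H (M, r) (N, t)))"
  using LV unfolding left_closed_via_def is_left_ihom_def modl_def by simp

lemma e_hom: assumes "modl M r" "modl N t"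
  shows "ar (e (M, r) (N, t))" "dm (e (M, r) (N, t)) = fst (H (M, r) (N, t)) \<odot> M" "cd (e (M, r) (N, t)) = N"
    "t \<cdot> Tm (e (M, r) (N, t)) = e (M, r) (N, t) \<cdot> (snd (H (M, r) (N, t)) \<otimes> r) \<cdot> T2 (fst (H (M, r) (N, t))) M"
proof -
  have "e (M, r) (N, t) \<in> c_hom (EM C T) (c_tens_o (EM C T) (H (M, r) (N, t)) (M, r)) (N, t)"
    using LV assms unfolding left_closed_via_def is_left_ihom_def modl_def by simp
  moreover obtain IO ia where "H (M, r) (N, t) = (IO, ia)" by (cases "H (M, r) (N, t)")
  ultimately show "ar (e (M, r) (N, t))" "dm (e (M, r) (N, t)) = fst (H (M, r) (N, t)) \<odot> M" "cd (e (M, r) (N, t)) = N"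
    "t \<cdot> Tm (e (M, r) (N, t)) = e (M, r) (N, t) \<cdot> (snd (H (M, r) (N, t)) \<otimes> r) \<cdot> T2 (fst (H (M, r) (N, t))) M"
    by simp_all
qed

lemma e_univ: assumes "modl M r" "modl N t" "A \<in> em_ob C T"
  "f \<in> c_hom (EM C T) (c_tens_o (EM C T) A (M, r)) (N, t)"
  shows "\<exists>!g. g \<in> c_hom (EM C T) A (H (M, r) (N, t)) \<and> e (M, r) (N, t) \<cdot> (g \<otimes> idm M) = f"
proof -
  have "is_left_ihom (EM C T) (M, r) (N, t) (H (M, r) (N, t)) (e (M, r) (N, t))"
    using LV assms unfolding left_closed_via_def modl_def by simp
  hence "\<forall>A\<in>c_ob (EM C T). \<forall>f\<in>c_hom (EM C T) (c_tens_o (EM C T) A (M, r)) (N, t).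
        \<exists>!g. g \<in> c_hom (EM C T) A (H (M, r) (N, t)) \<and> c_comp (EM C T) (e (M, r) (N, t)) (c_tens_m (EM C T) g (c_id (EM C T) (M, r))) = f"
    unfolding is_left_ihom_def by blast
  thus ?thesis using assms(3,4) by simp
qed

lemma phi_ex: assumes "modl M r" "modl N t"
  shows "\<exists>\<phi> \<psi>. ar \<phi> \<and> dm \<phi> = fst (H (M, r) (N, t)) \<and> cd \<phi> = Ih M N \<and> Ev M N \<cdot> (\<phi> \<otimes> idm M) = e (M, r) (N, t) \<and>
     ar \<psi> \<and> dm \<psi> = Ih M N \<and> cd \<psi> = fst (H (M, r) (N, t)) \<and> \<psi> \<cdot> \<phi> = idm (fst (H (M, r) (N, t))) \<and> \<phi> \<cdot> \<psi> = idm (Ih M N)"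
proof -
  obtain \<phi> where p: "\<phi> \<in> Hom (fst (H (M, r) (N, t))) (Ih M N)" "Ev M N \<cdot> (\<phi> \<otimes> idm M) = e (M, r) (N, t)"
    "iso C \<phi> (fst (H (M, r) (N, t))) (Ih M N)"
    using FL assms unfolding forgetful_left_closed_def modl_def by blast
  then obtain \<psi> where "\<psi> \<in> Hom (Ih M N) (fst (H (M, r) (N, t)))" "\<psi> \<cdot> \<phi> = idm (fst (H (M, r) (N, t)))" "\<phi> \<cdot> \<psi> = idm (Ih M N)"
    unfolding iso_def by blast
  thus ?thesis using p hom_iff by blast
qed

lemma U1: assumes m1: "modl M r" and m2: "modl N t"
  and w: "ar w1" "ar w2" "dm w1 = dm w2" "cd w1 = fst (H (M, r) (N, t))" "cd w2 = fst (H (M, r) (N, t))"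
  and eq: "e (M, r) (N, t) \<cdot> (w1 \<otimes> idm M) = e (M, r) (N, t) \<cdot> (w2 \<otimes> idm M)"
  shows "w1 = w2"
proof -
  note m = modlD[OF m1] modlD[OF m2]
  obtain \<phi> \<psi> where p: "ar \<phi>" "dm \<phi> = fst (H (M, r) (N, t))" "cd \<phi> = Ih M N" "Ev M N \<cdot> (\<phi> \<otimes> idm M) = e (M, r) (N, t)"
     "ar \<psi>" "dm \<psi> = Ih M N" "cd \<psi> = fst (H (M, r) (N, t))" "\<psi> \<cdot> \<phi> = idm (fst (H (M, r) (N, t)))"
    using phi_ex[OF m1 m2] by blast
  have "Ev M N \<cdot> ((\<phi> \<cdot> w1) \<otimes> idm M) = Ev M N \<cdot> ((\<phi> \<cdot> w2) \<otimes> idm M)"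
  proof -
    have "Ev M N \<cdot> ((\<phi> \<cdot> w1) \<otimes> idm M) = e (M, r) (N, t) \<cdot> (w1 \<otimes> idm M)"
      using p w m by (simp add: mg1 mg2 flip: p(4))
    also have "\<dots> = e (M, r) (N, t) \<cdot> (w2 \<otimes> idm M)" by (rule eq)
    also have "\<dots> = Ev M N \<cdot> ((\<phi> \<cdot> w2) \<otimes> idm M)"
      using p w m by (simp add: mg1 mg2 flip: p(4))
    finally show ?thesis .
  qed
  hence "\<phi> \<cdot> w1 = \<phi> \<cdot> w2" by (rule ev_uniq[of M N, rotated -1]) (use p w m in simp_all)
  hence "\<psi> \<cdot> \<phi> \<cdot> w1 = \<psi> \<cdot> \<phi> \<cdot> w2" by simp
  thus ?thesis using p w by (simp flip: assoc)
qed

lemma U2: assumes m1: "modl M r" and m2: "modl N t" and B: "B \<in> Ob"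
  and f: "ar f" "dm f = B \<odot> M" "cd f = N"
  shows "\<exists>w. ar w \<and> dm w = B \<and> cd w = fst (H (M, r) (N, t)) \<and> e (M, r) (N, t) \<cdot> (w \<otimes> idm M) = f"
proof -
  note m = modlD[OF m1] modlD[OF m2]
  obtain \<phi> \<psi> where p: "ar \<phi>" "dm \<phi> = fst (H (M, r) (N, t))" "cd \<phi> = Ih M N" "Ev M N \<cdot> (\<phi> \<otimes> idm M) = e (M, r) (N, t)"
     "ar \<psi>" "dm \<psi> = Ih M N" "cd \<psi> = fst (H (M, r) (N, t))" "\<phi> \<cdot> \<psi> = idm (Ih M N)"
    using phi_ex[OF m1 m2] by blast
  obtain g where g: "ar g" "dm g = B" "cd g = Ih M N" "Ev M N \<cdot> (g \<otimes> idm M) = f"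
    using ev_ex[of M N f B] m f B by auto
  have "e (M, r) (N, t) \<cdot> ((\<psi> \<cdot> g) \<otimes> idm M) = Ev M N \<cdot> ((\<phi> \<cdot> \<psi> \<cdot> g) \<otimes> idm M)"
    using p g m by (simp add: mg1 mg2 flip: p(4))
  also have "\<dots> = f" using p g m by (simp flip: assoc)
  finally show ?thesis using p g by (intro exI[of _ "\<psi> \<cdot> g"]) simp
qed


lemma FT: assumes X: "X \<in> Ob" and Y: "Y \<in> Ob" and mN: "modl N t"
  and u: "ar u1" "ar u2" "dm u1 = To X \<odot> To Y" "dm u2 = To X \<odot> To Y" "cd u1 = N" "cd u2 = N"
  and l: "t \<cdot> Tm u1 = u1 \<cdot> (Mu X \<otimes> Mu Y) \<cdot> T2 (To X) (To Y)" "t \<cdot> Tm u2 = u2 \<cdot> (Mu X \<otimes> Mu Y) \<cdot> T2 (To X) (To Y)"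
  and eq: "u1 \<cdot> (Eta X \<otimes> idm (To Y)) = u2 \<cdot> (Eta X \<otimes> idm (To Y))"
  shows "u1 = u2"
proof -
  have fX: "modl (To X) (Mu X)" and fY: "modl (To Y) (Mu Y)" using free_modl X Y by auto
  note m = modlD[OF mN]
  define JO where "JO = fst (H (To Y, Mu Y) (N, t))"
  define ja where "ja = snd (H (To Y, Mu Y) (N, t))"
  define eQ where "eQ = e (To Y, Mu Y) (N, t)"
  have mJ: "modl JO ja" unfolding JO_def ja_def by (rule Hmod[OF fY mN])
  note mj = modlD[OF mJ]
  have eh: "ar eQ" "dm eQ = JO \<odot> To Y" "cd eQ = N" unfolding eQ_def JO_def using e_hom[OF fY mN] by simp_all
  have HJ: "H (To Y, Mu Y) (N, t) = (JO, ja)" unfolding JO_def ja_def by simp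
  have fXo: "(To X, Mu X) \<in> em_ob C T" using fX unfolding modl_def .
  have v: "\<exists>v. ar v \<and> dm v = To X \<and> cd v = JO \<and> ja \<cdot> Tm v = v \<cdot> Mu X \<and> eQ \<cdot> (v \<otimes> idm (To Y)) = u"
    if "ar u" "dm u = To X \<odot> To Y" "cd u = N" "t \<cdot> Tm u = u \<cdot> (Mu X \<otimes> Mu Y) \<cdot> T2 (To X) (To Y)" for u
  proof -
    have "u \<in> c_hom (EM C T) (c_tens_o (EM C T) (To X, Mu X) (To Y, Mu Y)) (N, t)"
      using that tens_modl[OF fX fY] mN unfolding modl_def by simp
    from ex1_implies_ex[OF e_univ[OF fY mN fXo this]] obtain v where
      "v \<in> c_hom (EM C T) (To X, Mu X) (H (To Y, Mu Y) (N, t))" "e (To Y, Mu Y) (N, t) \<cdot> (v \<otimes> idm (To Y)) = u" by blast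
    thus ?thesis unfolding HJ eQ_def by auto
  qed
  obtain v1 where v1: "ar v1" "dm v1 = To X" "cd v1 = JO" "ja \<cdot> Tm v1 = v1 \<cdot> Mu X" "eQ \<cdot> (v1 \<otimes> idm (To Y)) = u1"
    using v[OF u(1,3,5) l(1)] by blast
  obtain v2 where v2: "ar v2" "dm v2 = To X" "cd v2 = JO" "ja \<cdot> Tm v2 = v2 \<cdot> Mu X" "eQ \<cdot> (v2 \<otimes> idm (To Y)) = u2"
    using v[OF u(2,4,6) l(2)] by blast
  have "eQ \<cdot> ((v1 \<cdot> Eta X) \<otimes> idm (To Y)) = eQ \<cdot> ((v2 \<cdot> Eta X) \<otimes> idm (To Y))"
  proof -
    have "eQ \<cdot> ((v1 \<cdot> Eta X) \<otimes> idm (To Y)) = u1 \<cdot> (Eta X \<otimes> idm (To Y))"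
      using v1 X Y eh by (simp add: mg1 mg2 cont[OF v1(5)] flip: v1(5))
    also have "\<dots> = u2 \<cdot> (Eta X \<otimes> idm (To Y))" by (rule eq)
    also have "\<dots> = eQ \<cdot> ((v2 \<cdot> Eta X) \<otimes> idm (To Y))"
      using v2 X Y eh by (simp add: mg1 mg2 cont[OF v2(5)] flip: v2(5))
    finally show ?thesis .
  qed
  hence "v1 \<cdot> Eta X = v2 \<cdot> Eta X" unfolding eQ_def
    by (rule U1[OF fY mN, rotated -1]) (use v1 v2 X JO_def in simp_all)
  hence "v1 = v2" by (rule free_uniq[OF mJ X, rotated -1]) (use v1 v2 in simp_all)
  thus ?thesis using v1(5) v2(5) by simp
qed

lemma ii_i: "left_hopf C T"
  unfolding left_hopf_def
proof (intro ballI)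
  fix X Y assume X: "X \<in> Ob" and Y: "Y \<in> Ob"
  have fX: "modl (To X) (Mu X)" and fY: "modl (To Y) (Mu Y)" and fN: "modl (To (X \<odot> To Y)) (Mu (X \<odot> To Y))"
    using free_modl X Y by auto
  have fXY: "modl (To X \<odot> To Y) ((Mu X \<otimes> Mu Y) \<cdot> T2 (To X) (To Y))" by (rule tens_modl[OF fX fY])
  define IO where "IO = fst (H (To Y, Mu Y) (To (X \<odot> To Y), Mu (X \<odot> To Y)))"
  define ia where "ia = snd (H (To Y, Mu Y) (To (X \<odot> To Y), Mu (X \<odot> To Y)))"
  define e0 where "e0 = e (To Y, Mu Y) (To (X \<odot> To Y), Mu (X \<odot> To Y))"
  have mI: "modl IO ia" unfolding IO_def ia_def by (rule Hmod[OF fY fN])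
  note mi = modlD[OF mI]
  have eh: "ar e0" "dm e0 = IO \<odot> To Y" "cd e0 = To (X \<odot> To Y)"
    "Mu (X \<odot> To Y) \<cdot> Tm e0 = e0 \<cdot> (ia \<otimes> Mu Y) \<cdot> T2 IO (To Y)"
    unfolding e0_def IO_def ia_def using e_hom[OF fY fN] by simp_all
  obtain w where w: "ar w" "dm w = X" "cd w = IO" "e0 \<cdot> (w \<otimes> idm (To Y)) = Eta (X \<odot> To Y)"
    using U2[OF fY fN X, of "Eta (X \<odot> To Y)"] X Y unfolding e0_def IO_def by auto
  define ws where "ws = ia \<cdot> Tm w"
  have ws: "ar ws" "dm ws = To X" "cd ws = IO" unfolding ws_def using w mi by simp_all
  have wsl: "ia \<cdot> Tm ws = ws \<cdot> Mu X"
  proof -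
    have "ia \<cdot> Tm ws = ia \<cdot> Tm ia \<cdot> Tm (Tm w)" unfolding ws_def using w mi by simp
    also have "\<dots> = ia \<cdot> Mu IO \<cdot> Tm (Tm w)" using w mi by (simp add: cont[OF mi(5)])
    also have "\<dots> = ws \<cdot> Mu X" unfolding ws_def using w mi X by (simp add: cont[OF mun] mun)
    finally show ?thesis .
  qed
  have wn: "Tm w \<cdot> Eta X = Eta IO \<cdot> w" using etan[of w IO X] w by simp
  have wse: "ws \<cdot> Eta X = w" unfolding ws_def using w mi X by (simp add: wn cont[OF mi(6)])
  define G where "G = e0 \<cdot> (ws \<otimes> idm (To Y))"
  have Gt: "ar G" "dm G = To X \<odot> To Y" "cd G = To (X \<odot> To Y)" unfolding G_def using ws eh X Y by simp_all
  have Geta: "G \<cdot> (Eta X \<otimes> idm (To Y)) = Eta (X \<odot> To Y)"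
    unfolding G_def using ws eh X Y wse w by (simp add: mg1 mg2)
  have Glin: "Mu (X \<odot> To Y) \<cdot> Tm G = G \<cdot> (Mu X \<otimes> Mu Y) \<cdot> T2 (To X) (To Y)"
  proof -
    have "Mu (X \<odot> To Y) \<cdot> Tm G = e0 \<cdot> (ia \<otimes> Mu Y) \<cdot> T2 IO (To Y) \<cdot> Tm (ws \<otimes> idm (To Y))"
      unfolding G_def using ws eh X Y mi by (simp add: cont[OF eh(4)])
    also have "\<dots> = e0 \<cdot> (ia \<otimes> Mu Y) \<cdot> (Tm ws \<otimes> Tm (idm (To Y))) \<cdot> T2 (To X) (To Y)"
      using ws eh X Y mi by (simp add: t2n cont[OF t2n])
    also have "\<dots> = e0 \<cdot> ((ia \<cdot> Tm ws) \<otimes> Mu Y) \<cdot> T2 (To X) (To Y)"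
      using ws eh X Y mi by (simp add: mg1 mg2)
    also have "\<dots> = G \<cdot> (Mu X \<otimes> Mu Y) \<cdot> T2 (To X) (To Y)"
      unfolding G_def wsl using ws eh X Y mi by (simp add: mg1 mg2)
    finally show ?thesis .
  qed
  have Hl: "(Mu X \<otimes> Mu Y) \<cdot> T2 (To X) (To Y) \<cdot> Tm (Hf X Y) = Hf X Y \<cdot> Mu (X \<odot> To Y)" by (rule Hf_lin[OF X Y])
  have He: "Hf X Y \<cdot> Eta (X \<odot> To Y) = Eta X \<otimes> idm (To Y)" by (rule Hf_eta[OF X Y])
  have GH: "G \<cdot> Hf X Y = idm (To (X \<odot> To Y))"
  proof (rule free_uniq[OF fN])
    show "X \<odot> To Y \<in> Ob" using X Y by simp
    show "Mu (X \<odot> To Y) \<cdot> Tm (G \<cdot> Hf X Y) = (G \<cdot> Hf X Y) \<cdot> Mu (X \<odot> To Y)"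
    proof -
      have "Mu (X \<odot> To Y) \<cdot> Tm (G \<cdot> Hf X Y) = G \<cdot> (Mu X \<otimes> Mu Y) \<cdot> T2 (To X) (To Y) \<cdot> Tm (Hf X Y)"
        using Gt X Y by (simp add: cont[OF Glin])
      also have "\<dots> = (G \<cdot> Hf X Y) \<cdot> Mu (X \<odot> To Y)"
        using Gt X Y by (simp add: Hl)
      finally show ?thesis .
    qed
    show "(G \<cdot> Hf X Y) \<cdot> Eta (X \<odot> To Y) = idm (To (X \<odot> To Y)) \<cdot> Eta (X \<odot> To Y)"
      using Gt X Y by (simp add: He Geta)
  qed (use Gt X Y in simp_all)
  have HG: "Hf X Y \<cdot> G = idm (To X \<odot> To Y)"
  proof (rule FT[OF X Y fXY])
    show "((Mu X \<otimes> Mu Y) \<cdot> T2 (To X) (To Y)) \<cdot> Tm (Hf X Y \<cdot> G) = (Hf X Y \<cdot> G) \<cdot> (Mu X \<otimes> Mu Y) \<cdot> T2 (To X) (To Y)"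
    proof -
      have "((Mu X \<otimes> Mu Y) \<cdot> T2 (To X) (To Y)) \<cdot> Tm (Hf X Y \<cdot> G) = Hf X Y \<cdot> Mu (X \<odot> To Y) \<cdot> Tm G"
        using Gt X Y by (simp add: cont3[OF Hl])
      also have "\<dots> = (Hf X Y \<cdot> G) \<cdot> (Mu X \<otimes> Mu Y) \<cdot> T2 (To X) (To Y)"
        using Gt X Y by (simp add: Glin)
      finally show ?thesis .
    qed
    show "(Hf X Y \<cdot> G) \<cdot> (Eta X \<otimes> idm (To Y)) = idm (To X \<odot> To Y) \<cdot> (Eta X \<otimes> idm (To Y))"
      using Gt X Y by (simp add: He Geta)
  qed (use Gt X Y in simp_all)
  show "iso C ((idm (To X) \<otimes> Mu Y) \<cdot> T2 X (To Y)) (To (X \<odot> To Y)) (To X \<odot> To Y)"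
    unfolding iso_def
  proof (intro conjI bexI[of _ G])
    show "(idm (To X) \<otimes> Mu Y) \<cdot> T2 X (To Y) \<in> Hom (To (X \<odot> To Y)) (To X \<odot> To Y)"
      using X Y hom_iff by simp
    show "G \<in> Hom (To X \<odot> To Y) (To (X \<odot> To Y))" using Gt hom_iff by simp
    show "G \<cdot> ((idm (To X) \<otimes> Mu Y) \<cdot> T2 X (To Y)) = idm (To (X \<odot> To Y))" using GH unfolding Hf_def .
    show "((idm (To X) \<otimes> Mu Y) \<cdot> T2 X (To Y)) \<cdot> G = idm (To X \<odot> To Y)" using HG unfolding Hf_def .
  qed
qed
end
end

context hs begin

context assumes LH: "left_hopf C T"
begin

definition Hi :: "'o \<Rightarrow> 'o \<Rightarrow> 'm" where
  "Hi X Y = (SOME g. g \<in> Hom (To X \<odot> To Y) (To (X \<odot> To Y)) \<and> g \<cdot> Hf X Y = idm (To (X \<odot> To Y)) \<and> Hf X Y \<cdot> g = idm (To X \<odot> To Y))"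

lemma Hi_prop: assumes "X \<in> Ob" "Y \<in> Ob"
  shows "ar (Hi X Y)" "dm (Hi X Y) = To X \<odot> To Y" "cd (Hi X Y) = To (X \<odot> To Y)"
    "Hi X Y \<cdot> Hf X Y = idm (To (X \<odot> To Y))" "Hf X Y \<cdot> Hi X Y = idm (To X \<odot> To Y)"
proof -
  have "iso C (Hf X Y) (To (X \<odot> To Y)) (To X \<odot> To Y)"
    using LH assms unfolding left_hopf_def Hf_def by blast
  hence "\<exists>g. g \<in> Hom (To X \<odot> To Y) (To (X \<odot> To Y)) \<and> g \<cdot> Hf X Y = idm (To (X \<odot> To Y)) \<and> Hf X Y \<cdot> g = idm (To X \<odot> To Y)"
    unfolding iso_def by blast
  hence "Hi X Y \<in> Hom (To X \<odot> To Y) (To (X \<odot> To Y)) \<and> Hi X Y \<cdot> Hf X Y = idm (To (X \<odot> To Y)) \<and> Hf X Y \<cdot> Hi X Y = idm (To X \<odot> To Y)"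
    unfolding Hi_def by (rule someI_ex)
  thus "ar (Hi X Y)" "dm (Hi X Y) = To X \<odot> To Y" "cd (Hi X Y) = To (X \<odot> To Y)"
    "Hi X Y \<cdot> Hf X Y = idm (To (X \<odot> To Y))" "Hf X Y \<cdot> Hi X Y = idm (To X \<odot> To Y)"
    using hom_iff by auto
qed

lemma Hi_ar[simp]: "X \<in> Ob \<Longrightarrow> Y \<in> Ob \<Longrightarrow> ar (Hi X Y)"
  and Hi_dm[simp]: "X \<in> Ob \<Longrightarrow> Y \<in> Ob \<Longrightarrow> dm (Hi X Y) = To X \<odot> To Y"
  and Hi_cd[simp]: "X \<in> Ob \<Longrightarrow> Y \<in> Ob \<Longrightarrow> cd (Hi X Y) = To (X \<odot> To Y)"
  using Hi_prop by auto

lemma conjg: assumes X1: "X1 \<in> Ob" "Y1 \<in> Ob" and X2: "X2 \<in> Ob" "Y2 \<in> Ob"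
  and A: "ar A" "dm A = To (X2 \<odot> To Y2)" "cd A = To (X1 \<odot> To Y1)"
  and B: "ar B" "dm B = To X2 \<odot> To Y2" "cd B = To X1 \<odot> To Y1"
  and eq: "Hf X1 Y1 \<cdot> A = B \<cdot> Hf X2 Y2"
  shows "Hi X1 Y1 \<cdot> B = A \<cdot> Hi X2 Y2"
proof -
  note h1 = Hi_prop[OF X1] and h2 = Hi_prop[OF X2]
  have "Hi X1 Y1 \<cdot> B = Hi X1 Y1 \<cdot> B \<cdot> Hf X2 Y2 \<cdot> Hi X2 Y2" using h1 h2 A B X1 X2 by simp
  also have "\<dots> = Hi X1 Y1 \<cdot> Hf X1 Y1 \<cdot> A \<cdot> Hi X2 Y2" using A B X1 X2 by (simp add: cont[OF eq[symmetric]])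
  also have "\<dots> = A \<cdot> Hi X2 Y2" using h1 h2 A B X1 X2 by (simp add: cont[OF h1(4)])
  finally show ?thesis .
qed

lemma h2: assumes f: "ar f" and Y: "Y \<in> Ob"
  shows "Hi (cd f) Y \<cdot> (Tm f \<otimes> idm (To Y)) = Tm (f \<otimes> idm (To Y)) \<cdot> Hi (dm f) Y"
proof (rule conjg)
  show "Hf (cd f) Y \<cdot> Tm (f \<otimes> idm (To Y)) = (Tm f \<otimes> idm (To Y)) \<cdot> Hf (dm f) Y"
  proof -
    have "Hf (cd f) Y \<cdot> Tm (f \<otimes> idm (To Y)) = (idm (To (cd f)) \<otimes> Mu Y) \<cdot> (Tm f \<otimes> Tm (idm (To Y))) \<cdot> T2 (dm f) (To Y)"
      unfolding Hf_def using f Y by (simp add: t2n cont[OF t2n])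
    also have "\<dots> = (Tm f \<otimes> idm (To Y)) \<cdot> Hf (dm f) Y"
      unfolding Hf_def using f Y by (simp add: mg1 mg2)
    finally show ?thesis .
  qed
qed (use f Y in simp_all)

lemma h3: assumes X: "X \<in> Ob" and g: "ar g"
  shows "Hi X (cd g) \<cdot> (idm (To X) \<otimes> Tm g) = Tm (idm X \<otimes> Tm g) \<cdot> Hi X (dm g)"
proof (rule conjg)
  show "Hf X (cd g) \<cdot> Tm (idm X \<otimes> Tm g) = (idm (To X) \<otimes> Tm g) \<cdot> Hf X (dm g)"
  proof -
    have "Hf X (cd g) \<cdot> Tm (idm X \<otimes> Tm g) = (idm (To X) \<otimes> Mu (cd g)) \<cdot> (Tm (idm X) \<otimes> Tm (Tm g)) \<cdot> T2 X (To (dm g))"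
      unfolding Hf_def using X g by (simp add: t2n cont[OF t2n])
    also have "\<dots> = (idm (To X) \<otimes> (Mu (cd g) \<cdot> Tm (Tm g))) \<cdot> T2 X (To (dm g))"
      using X g by (simp add: mg1 mg2)
    also have "\<dots> = (idm (To X) \<otimes> Tm g) \<cdot> Hf X (dm g)"
      unfolding Hf_def using X g by (simp add: mg1 mg2 mu_nat)
    finally show ?thesis .
  qed
qed (use X g in simp_all)

lemma h4: assumes X: "X \<in> Ob" and Y: "Y \<in> Ob"
  shows "Hi X Y \<cdot> (idm (To X) \<otimes> Mu Y) = Tm (idm X \<otimes> Mu Y) \<cdot> Hi X (To Y)"
proof (rule conjg)
  show "Hf X Y \<cdot> Tm (idm X \<otimes> Mu Y) = (idm (To X) \<otimes> Mu Y) \<cdot> Hf X (To Y)"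
  proof -
    have "Hf X Y \<cdot> Tm (idm X \<otimes> Mu Y) = (idm (To X) \<otimes> Mu Y) \<cdot> (Tm (idm X) \<otimes> Tm (Mu Y)) \<cdot> T2 X (To (To Y))"
      unfolding Hf_def using X Y by (simp add: t2n cont[OF t2n])
    also have "\<dots> = (idm (To X) \<otimes> (Mu Y \<cdot> Tm (Mu Y))) \<cdot> T2 X (To (To Y))"
      using X Y by (simp add: mg1 mg2)
    also have "\<dots> = (idm (To X) \<otimes> Mu Y) \<cdot> Hf X (To Y)"
      unfolding Hf_def using X Y by (simp add: mg1 mg2 mu_assoc)
    finally show ?thesis .
  qed
qed (use X Y in simp_all)

lemma h5: assumes X: "X \<in> Ob" and Y: "Y \<in> Ob"
  shows "Hi X Y \<cdot> T2 X Y = Tm (idm X \<otimes> Eta Y)"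
proof -
  note h = Hi_prop[OF X Y]
  have e: "Hf X Y \<cdot> Tm (idm X \<otimes> Eta Y) = T2 X Y"
  proof -
    have "Hf X Y \<cdot> Tm (idm X \<otimes> Eta Y) = (idm (To X) \<otimes> Mu Y) \<cdot> (Tm (idm X) \<otimes> Tm (Eta Y)) \<cdot> T2 X Y"
      unfolding Hf_def using X Y by (simp add: t2n cont[OF t2n])
    also have "\<dots> = T2 X Y" using X Y by (simp add: mg1 mg2)
    finally show ?thesis .
  qed
  have "Hi X Y \<cdot> T2 X Y = Hi X Y \<cdot> Hf X Y \<cdot> Tm (idm X \<otimes> Eta Y)" using e by simp
  also have "\<dots> = Tm (idm X \<otimes> Eta Y)" using h X Y by (simp add: cont[OF h(4)])
  finally show ?thesis .
qed


definition rho :: "'o \<Rightarrow> 'o \<Rightarrow> 'm" where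
  "rho X Y = Tm (Ev (To X) Y) \<cdot> Hi (Ih (To X) Y) X \<cdot> (idm (To (Ih (To X) Y)) \<otimes> Eta X)"

lemma rho_t[simp]: "X \<in> Ob \<Longrightarrow> Y \<in> Ob \<Longrightarrow> ar (rho X Y)"
  "X \<in> Ob \<Longrightarrow> Y \<in> Ob \<Longrightarrow> dm (rho X Y) = To (Ih (To X) Y) \<odot> X"
  "X \<in> Ob \<Longrightarrow> Y \<in> Ob \<Longrightarrow> cd (rho X Y) = To Y"
  unfolding rho_def by simp_all

definition sA :: "'o \<Rightarrow> 'o \<Rightarrow> 'm" where
  "sA X Y = (SOME g. ar g \<and> dm g = To (Ih (To X) Y) \<and> cd g = Ih X (To Y) \<and> Ev X (To Y) \<cdot> (g \<otimes> idm X) = rho X Y)"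

lemma sA_prop: assumes "X \<in> Ob" "Y \<in> Ob"
  shows "ar (sA X Y)" "dm (sA X Y) = To (Ih (To X) Y)" "cd (sA X Y) = Ih X (To Y)" "Ev X (To Y) \<cdot> (sA X Y \<otimes> idm X) = rho X Y"
proof -
  have "\<exists>g. ar g \<and> dm g = To (Ih (To X) Y) \<and> cd g = Ih X (To Y) \<and> Ev X (To Y) \<cdot> (g \<otimes> idm X) = rho X Y"
    using ev_ex[of X "To Y" "rho X Y" "To (Ih (To X) Y)"] assms by simp
  hence "ar (sA X Y) \<and> dm (sA X Y) = To (Ih (To X) Y) \<and> cd (sA X Y) = Ih X (To Y) \<and> Ev X (To Y) \<cdot> (sA X Y \<otimes> idm X) = rho X Y"
    unfolding sA_def by (rule someI_ex)
  thus "ar (sA X Y)" "dm (sA X Y) = To (Ih (To X) Y)" "cd (sA X Y) = Ih X (To Y)" "Ev X (To Y) \<cdot> (sA X Y \<otimes> idm X) = rho X Y"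
    by auto
qed

lemma sA_t[simp]: "X \<in> Ob \<Longrightarrow> Y \<in> Ob \<Longrightarrow> ar (sA X Y)"
  "X \<in> Ob \<Longrightarrow> Y \<in> Ob \<Longrightarrow> dm (sA X Y) = To (Ih (To X) Y)"
  "X \<in> Ob \<Longrightarrow> Y \<in> Ob \<Longrightarrow> cd (sA X Y) = Ih X (To Y)"
  using sA_prop by auto

lemma sA_nat: assumes f: "ar f" and g: "ar g"
  shows "sA (dm f) (cd g) \<cdot> Tm (Ihm (Tm f) g) = Ihm f (Tm g) \<cdot> sA (cd f) (dm g)"
proof -
  define X where "X = cd f"
  define X' where "X' = dm f"
  define Y where "Y = dm g"
  define Y' where "Y' = cd g"
  have ob: "X \<in> Ob" "X' \<in> Ob" "Y \<in> Ob" "Y' \<in> Ob" unfolding X_def X'_def Y_def Y'_def using f g by simp_all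
  have ft: "dm f = X'" "cd f = X" and gt: "dm g = Y" "cd g = Y'" unfolding X_def X'_def Y_def Y'_def by simp_all
  define W where "W = Ih (To X) Y"
  define W' where "W' = Ih (To X') Y'"
  define k where "k = Ihm (Tm f) g"
  have kt: "ar k" "dm k = W" "cd k = W'" unfolding k_def W_def W'_def using f g ft gt by simp_all
  have s1: "Ev X' (To Y') \<cdot> (sA X' Y' \<otimes> idm X') = rho X' Y'" by (rule sA_prop(4)[OF ob(2,4)])
  have s2: "Ev X (To Y) \<cdot> (sA X Y \<otimes> idm X) = rho X Y" by (rule sA_prop(4)[OF ob(1,3)])
  have H2: "Hi W' X' \<cdot> (Tm k \<otimes> idm (To X')) = Tm (k \<otimes> idm (To X')) \<cdot> Hi W X'"
    using h2[OF kt(1) ob(2)] kt by simp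
  have H3: "Hi W X \<cdot> (idm (To W) \<otimes> Tm f) = Tm (idm W \<otimes> Tm f) \<cdot> Hi W X'"
    using h3[of W f] kt ft f ob W_def by simp
  have IE: "Ev (To X') Y' \<cdot> (k \<otimes> idm (To X')) = g \<cdot> Ev (To X) Y \<cdot> (idm W \<otimes> Tm f)"
    unfolding k_def W_def using ihe[of "Tm f" g "To X'" Y' "To X" Y] f g ft gt by simp
  have IE2: "Ev X' (To Y') \<cdot> (Ihm f (Tm g) \<otimes> idm X') = Tm g \<cdot> Ev X (To Y) \<cdot> (idm (Ih X (To Y)) \<otimes> f)"
    using ihe[of f "Tm g" X' "To Y'" X "To Y"] f g ft gt by simp
  have EN: "Eta X \<cdot> f = Tm f \<cdot> Eta X'" using etan[of f X X'] f ft by simp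
  have Wob: "W \<in> Ob" "W' \<in> Ob" unfolding W_def W'_def using ob by simp_all
  have L: "Ev X' (To Y') \<cdot> ((sA X' Y' \<cdot> Tm k) \<otimes> idm X') = Tm g \<cdot> Ev X (To Y) \<cdot> (sA X Y \<otimes> idm X) \<cdot> (idm (To W) \<otimes> f)"
  proof -
    have "Ev X' (To Y') \<cdot> ((sA X' Y' \<cdot> Tm k) \<otimes> idm X') = Ev X' (To Y') \<cdot> (sA X' Y' \<otimes> idm X') \<cdot> (Tm k \<otimes> idm X')"
      using ob kt Wob W_def[symmetric] W'_def[symmetric] by (simp add: mg1 mg2)
    also have "\<dots> = Tm (Ev (To X') Y') \<cdot> Hi W' X' \<cdot> (idm (To W') \<otimes> Eta X') \<cdot> (Tm k \<otimes> idm X')"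
      unfolding W'_def using ob kt W_def W'_def by (simp add: cont[OF s1] rho_def)
    also have "\<dots> = Tm (Ev (To X') Y') \<cdot> Hi W' X' \<cdot> (Tm k \<otimes> idm (To X')) \<cdot> (idm (To W) \<otimes> Eta X')"
      using ob kt Wob W_def[symmetric] W'_def[symmetric] by (simp add: mg1 mg2)
    also have "\<dots> = Tm (Ev (To X') Y') \<cdot> Tm (k \<otimes> idm (To X')) \<cdot> Hi W X' \<cdot> (idm (To W) \<otimes> Eta X')"
      using ob kt Wob W_def[symmetric] W'_def[symmetric] by (simp add: cont[OF H2])
    also have "\<dots> = Tm (Ev (To X') Y' \<cdot> (k \<otimes> idm (To X'))) \<cdot> Hi W X' \<cdot> (idm (To W) \<otimes> Eta X')"
      using ob kt Wob W_def[symmetric] W'_def[symmetric] by simp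
    also have "\<dots> = Tm (g \<cdot> Ev (To X) Y \<cdot> (idm W \<otimes> Tm f)) \<cdot> Hi W X' \<cdot> (idm (To W) \<otimes> Eta X')"
      by (simp only: IE)
    also have "\<dots> = Tm g \<cdot> Tm (Ev (To X) Y) \<cdot> Tm (idm W \<otimes> Tm f) \<cdot> Hi W X' \<cdot> (idm (To W) \<otimes> Eta X')"
      using ob kt Wob W_def[symmetric] W'_def[symmetric] f g ft gt by simp
    also have "\<dots> = Tm g \<cdot> Tm (Ev (To X) Y) \<cdot> Hi W X \<cdot> (idm (To W) \<otimes> Tm f) \<cdot> (idm (To W) \<otimes> Eta X')"
      using ob kt Wob W_def[symmetric] W'_def[symmetric] f g ft gt by (simp add: cont[OF H3[symmetric]])
    also have "\<dots> = Tm g \<cdot> Tm (Ev (To X) Y) \<cdot> Hi W X \<cdot> (idm (To W) \<otimes> Eta X) \<cdot> (idm (To W) \<otimes> f)"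
      using ob kt Wob W_def[symmetric] W'_def[symmetric] f g ft gt EN by (simp add: mg1 mg2)
    also have "\<dots> = Tm g \<cdot> Ev X (To Y) \<cdot> (sA X Y \<otimes> idm X) \<cdot> (idm (To W) \<otimes> f)"
      unfolding W_def using ob kt f g ft gt W_def W'_def by (simp add: cont[OF s2] rho_def)
    finally show ?thesis .
  qed
  have R: "Ev X' (To Y') \<cdot> ((Ihm f (Tm g) \<cdot> sA X Y) \<otimes> idm X') = Tm g \<cdot> Ev X (To Y) \<cdot> (sA X Y \<otimes> idm X) \<cdot> (idm (To W) \<otimes> f)"
  proof -
    have "Ev X' (To Y') \<cdot> ((Ihm f (Tm g) \<cdot> sA X Y) \<otimes> idm X') = Ev X' (To Y') \<cdot> (Ihm f (Tm g) \<otimes> idm X') \<cdot> (sA X Y \<otimes> idm X')"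
      using ob f g ft gt by (simp add: mg1 mg2)
    also have "\<dots> = Tm g \<cdot> Ev X (To Y) \<cdot> (idm (Ih X (To Y)) \<otimes> f) \<cdot> (sA X Y \<otimes> idm X')"
      using ob f g ft gt by (simp add: cont[OF IE2])
    also have "\<dots> = Tm g \<cdot> Ev X (To Y) \<cdot> (sA X Y \<otimes> idm X) \<cdot> (idm (To W) \<otimes> f)"
      using ob f g ft gt W_def by (simp add: mg1 mg2)
    finally show ?thesis .
  qed
  have "sA X' Y' \<cdot> Tm k = Ihm f (Tm g) \<cdot> sA X Y"
    by (rule ev_uniq[of X' "To Y'"]) (use L R ob kt f g ft gt W_def W'_def in simp_all)
  thus ?thesis unfolding k_def X_def X'_def Y_def Y'_def .
qed

lemma sA_ax1: assumes X: "X \<in> Ob" and Y: "Y \<in> Ob"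
  shows "Tm (Ev X Y \<cdot> (Ihm (Eta X) (idm Y) \<otimes> idm X))
        = Ev (To X) (To Y) \<cdot> ((sA (To X) Y \<cdot> Tm (Ihm (Mu X) (idm Y))) \<otimes> idm (To X)) \<cdot> T2 (Ih (To X) Y) X"
proof -
  define W0 where "W0 = Ih (To X) Y"
  define W1 where "W1 = Ih (To (To X)) Y"
  define k where "k = Ihm (Mu X) (idm Y)"
  have ob: "W0 \<in> Ob" "W1 \<in> Ob" unfolding W0_def W1_def using X Y by simp_all
  have kt: "ar k" "dm k = W0" "cd k = W1" unfolding k_def W0_def W1_def using X Y by simp_all
  note defs = W0_def[symmetric] W1_def[symmetric]
  have s1: "Ev (To X) (To Y) \<cdot> (sA (To X) Y \<otimes> idm (To X)) = Tm (Ev (To (To X)) Y) \<cdot> Hi W1 (To X) \<cdot> (idm (To W1) \<otimes> Eta (To X))"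
    using sA_prop(4)[of "To X" Y] X Y unfolding rho_def W1_def by simp
  have H2: "Hi W1 (To X) \<cdot> (Tm k \<otimes> idm (To (To X))) = Tm (k \<otimes> idm (To (To X))) \<cdot> Hi W0 (To X)"
    using h2[OF kt(1), of "To X"] kt X by simp
  have D: "Tm (Ev (To (To X)) Y) \<cdot> Tm (k \<otimes> idm (To (To X))) = Tm (Ev (To X) Y) \<cdot> Tm (idm W0 \<otimes> Mu X)"
  proof -
    have "Ev (To (To X)) Y \<cdot> (k \<otimes> idm (To (To X))) = Ev (To X) Y \<cdot> (idm W0 \<otimes> Mu X)"
      unfolding k_def W0_def using din[of "Mu X" Y "To X" "To (To X)"] X Y by simp
    hence "Tm (Ev (To (To X)) Y \<cdot> (k \<otimes> idm (To (To X)))) = Tm (Ev (To X) Y \<cdot> (idm W0 \<otimes> Mu X))" by simp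
    thus ?thesis using X Y kt ob defs by simp
  qed
  have H4: "Hi W0 X \<cdot> (idm (To W0) \<otimes> Mu X) = Tm (idm W0 \<otimes> Mu X) \<cdot> Hi W0 (To X)"
    by (rule h4[OF ob(1) X])
  have H5: "Hi W0 X \<cdot> T2 W0 X = Tm (idm W0 \<otimes> Eta X)" by (rule h5[OF ob(1) X])
  have D2: "Tm (Ev (To X) Y) \<cdot> Tm (idm W0 \<otimes> Eta X) = Tm (Ev X Y \<cdot> (Ihm (Eta X) (idm Y) \<otimes> idm X))"
  proof -
    have "Ev (To X) Y \<cdot> (idm W0 \<otimes> Eta X) = Ev X Y \<cdot> (Ihm (Eta X) (idm Y) \<otimes> idm X)"
      unfolding W0_def using din[of "Eta X" Y "To X" X] X Y by simp
    hence "Tm (Ev (To X) Y \<cdot> (idm W0 \<otimes> Eta X)) = Tm (Ev X Y \<cdot> (Ihm (Eta X) (idm Y) \<otimes> idm X))" by simp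
    thus ?thesis using X Y ob defs by simp
  qed
  have "Ev (To X) (To Y) \<cdot> ((sA (To X) Y \<cdot> Tm k) \<otimes> idm (To X)) \<cdot> T2 W0 X
      = Ev (To X) (To Y) \<cdot> (sA (To X) Y \<otimes> idm (To X)) \<cdot> (Tm k \<otimes> idm (To X)) \<cdot> T2 W0 X"
    using X Y ob kt defs by (simp add: mg1 mg2)
  also have "\<dots> = Tm (Ev (To (To X)) Y) \<cdot> Hi W1 (To X) \<cdot> (idm (To W1) \<otimes> Eta (To X)) \<cdot> (Tm k \<otimes> idm (To X)) \<cdot> T2 W0 X"
    using X Y ob kt defs by (simp add: cont[OF s1])
  also have "\<dots> = Tm (Ev (To (To X)) Y) \<cdot> Hi W1 (To X) \<cdot> (Tm k \<otimes> idm (To (To X))) \<cdot> (idm (To W0) \<otimes> Eta (To X)) \<cdot> T2 W0 X"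
    using X Y ob kt defs by (simp add: mg1 mg2)
  also have "\<dots> = Tm (Ev (To (To X)) Y) \<cdot> Tm (k \<otimes> idm (To (To X))) \<cdot> Hi W0 (To X) \<cdot> (idm (To W0) \<otimes> Eta (To X)) \<cdot> T2 W0 X"
    using X Y ob kt defs by (simp add: cont[OF H2])
  also have "\<dots> = Tm (Ev (To X) Y) \<cdot> Tm (idm W0 \<otimes> Mu X) \<cdot> Hi W0 (To X) \<cdot> (idm (To W0) \<otimes> Eta (To X)) \<cdot> T2 W0 X"
    using X Y ob kt defs by (simp add: cont[OF D])
  also have "\<dots> = Tm (Ev (To X) Y) \<cdot> Hi W0 X \<cdot> (idm (To W0) \<otimes> Mu X) \<cdot> (idm (To W0) \<otimes> Eta (To X)) \<cdot> T2 W0 X"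
    using X Y ob kt defs by (simp add: cont[OF H4])
  also have "\<dots> = Tm (Ev (To X) Y) \<cdot> Hi W0 X \<cdot> T2 W0 X"
    using X Y ob kt defs by (simp add: mg1 mg2)
  also have "\<dots> = Tm (Ev (To X) Y) \<cdot> Tm (idm W0 \<otimes> Eta X)"
    using X Y ob kt defs by (simp add: H5)
  also have "\<dots> = Tm (Ev X Y \<cdot> (Ihm (Eta X) (idm Y) \<otimes> idm X))" by (rule D2)
  finally show ?thesis unfolding W0_def k_def by simp
qed

lemma sA_ax2: assumes X: "X \<in> Ob" and Y: "Y \<in> Ob"
  shows "Ihm (idm X) (idm (To Y) \<otimes> Eta X) \<cdot> Coev X (To Y)
        = Ihm (idm X) ((idm (To Y) \<otimes> Mu X) \<cdot> T2 Y (To X)) \<cdot> sA X (Y \<odot> To X) \<cdot> Tm (Coev (To X) Y)"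
proof -
  define Z where "Z = Y \<odot> To X"
  define W where "W = Ih (To X) Z"
  have ob: "Z \<in> Ob" "W \<in> Ob" unfolding Z_def W_def using X Y by simp_all
  note defs = Z_def[symmetric] W_def[symmetric]
  have s1: "Ev X (To Z) \<cdot> (sA X Z \<otimes> idm X) = Tm (Ev (To X) Z) \<cdot> Hi W X \<cdot> (idm (To W) \<otimes> Eta X)"
    using sA_prop(4)[of X Z] X ob unfolding rho_def W_def by simp
  have H2: "Hi W X \<cdot> (Tm (Coev (To X) Y) \<otimes> idm (To X)) = Tm (Coev (To X) Y \<otimes> idm (To X)) \<cdot> Hi Y X"
    using h2[of "Coev (To X) Y" X] X Y unfolding W_def Z_def by simp
  have CT: "Tm (Ev (To X) Z) \<cdot> Tm (Coev (To X) Y \<otimes> idm (To X)) = idm (To Z)"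
    unfolding Z_def using X Y coev_tri[of "To X" Y] by (simp flip: Tm_comp)
  have HH: "Hf Y X \<cdot> Hi Y X = idm (To Y \<odot> To X)" using Hi_prop[OF Y X] by simp
  have L: "Ev X (To Y \<odot> To X) \<cdot> ((Ihm (idm X) (idm (To Y) \<otimes> Eta X) \<cdot> Coev X (To Y)) \<otimes> idm X) = idm (To Y) \<otimes> Eta X"
  proof -
    have "Ev X (To Y \<odot> To X) \<cdot> ((Ihm (idm X) (idm (To Y) \<otimes> Eta X) \<cdot> Coev X (To Y)) \<otimes> idm X)
        = Ev X (To Y \<odot> To X) \<cdot> (Ihm (idm X) (idm (To Y) \<otimes> Eta X) \<otimes> idm X) \<cdot> (Coev X (To Y) \<otimes> idm X)"
      using X Y by (simp add: mg1 mg2)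
    also have "\<dots> = (idm (To Y) \<otimes> Eta X) \<cdot> Ev X (To Y \<odot> X) \<cdot> (Coev X (To Y) \<otimes> idm X)"
      using X Y by (simp add: cont[OF evn])
    also have "\<dots> = idm (To Y) \<otimes> Eta X" using X Y by (simp add: coev_tri)
    finally show ?thesis .
  qed
  have R: "Ev X (To Y \<odot> To X) \<cdot> ((Ihm (idm X) (Hf Y X) \<cdot> sA X Z \<cdot> Tm (Coev (To X) Y)) \<otimes> idm X) = idm (To Y) \<otimes> Eta X"
  proof -
    have "Ev X (To Y \<odot> To X) \<cdot> ((Ihm (idm X) (Hf Y X) \<cdot> sA X Z \<cdot> Tm (Coev (To X) Y)) \<otimes> idm X)
        = Ev X (To Y \<odot> To X) \<cdot> (Ihm (idm X) (Hf Y X) \<otimes> idm X) \<cdot> ((sA X Z \<cdot> Tm (Coev (To X) Y)) \<otimes> idm X)"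
      using X Y ob defs by (simp add: mg1 mg2)
    also have "\<dots> = Hf Y X \<cdot> Ev X (To Z) \<cdot> ((sA X Z \<cdot> Tm (Coev (To X) Y)) \<otimes> idm X)"
      using X Y ob defs by (simp add: cont[OF evn])
    also have "\<dots> = Hf Y X \<cdot> Ev X (To Z) \<cdot> (sA X Z \<otimes> idm X) \<cdot> (Tm (Coev (To X) Y) \<otimes> idm X)"
      using X Y ob defs by (simp add: mg1 mg2)
    also have "\<dots> = Hf Y X \<cdot> Tm (Ev (To X) Z) \<cdot> Hi W X \<cdot> (idm (To W) \<otimes> Eta X) \<cdot> (Tm (Coev (To X) Y) \<otimes> idm X)"
      using X Y ob defs by (simp add: cont[OF s1])
    also have "\<dots> = Hf Y X \<cdot> Tm (Ev (To X) Z) \<cdot> Hi W X \<cdot> (Tm (Coev (To X) Y) \<otimes> idm (To X)) \<cdot> (idm (To Y) \<otimes> Eta X)"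
      using X Y ob defs by (simp add: mg1 mg2)
    also have "\<dots> = Hf Y X \<cdot> Tm (Ev (To X) Z) \<cdot> Tm (Coev (To X) Y \<otimes> idm (To X)) \<cdot> Hi Y X \<cdot> (idm (To Y) \<otimes> Eta X)"
      using X Y ob defs by (simp add: cont[OF H2])
    also have "\<dots> = Hf Y X \<cdot> Hi Y X \<cdot> (idm (To Y) \<otimes> Eta X)"
      using X Y ob defs by (simp add: cont[OF CT])
    also have "\<dots> = idm (To Y) \<otimes> Eta X"
      using X Y ob defs by (simp add: cont[OF HH])
    finally show ?thesis .
  qed
  have "Ihm (idm X) (idm (To Y) \<otimes> Eta X) \<cdot> Coev X (To Y) = Ihm (idm X) (Hf Y X) \<cdot> sA X Z \<cdot> Tm (Coev (To X) Y)"
    by (rule ev_uniq[of X "To Y \<odot> To X"]) (use L R X Y ob defs in simp_all)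
  thus ?thesis unfolding Hf_def Z_def .
qed

lemma i_iii: "left_antipode C L T sA"
  unfolding left_antipode_def
proof (intro conjI ballI allI impI)
  fix X Y assume "X \<in> Ob" "Y \<in> Ob"
  thus "sA X Y \<in> Hom (To (Ih (To X) Y)) (Ih X (To Y))" using hom_iff by simp
  show "Tm (Ev X Y \<cdot> (Ihm (Eta X) (idm Y) \<otimes> idm X))
        = Ev (To X) (To Y) \<cdot> ((sA (To X) Y \<cdot> Tm (Ihm (Mu X) (idm Y))) \<otimes> idm (To X)) \<cdot> T2 (Ih (To X) Y) X"
    by (rule sA_ax1) fact+
  show "Ihm (idm X) (idm (To Y) \<otimes> Eta X) \<cdot> Coev X (To Y)
        = Ihm (idm X) ((idm (To Y) \<otimes> Mu X) \<cdot> T2 Y (To X)) \<cdot> sA X (Y \<odot> To X) \<cdot> Tm (Coev (To X) Y)"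
    by (rule sA_ax2) fact+
next
  fix X X' Y Y' f g assume "f \<in> Hom X' X" "g \<in> Hom Y Y'"
  thus "sA X' Y' \<cdot> Tm (Ihm (Tm f) g) = Ihm f (Tm g) \<cdot> sA X Y"
    using sA_nat[of f g] hom_iff by auto
qed
end
end

context hs begin

lemma main_hs: "(left_hopf C T \<longleftrightarrow>
            (\<exists>H e. left_closed_via (EM C T) H e \<and> forgetful_left_closed C L T H e))
       \<and> ((\<exists>H e. left_closed_via (EM C T) H e \<and> forgetful_left_closed C L T H e) \<longleftrightarrow>
            (\<exists>s. left_antipode C L T s))
       \<and> (\<forall>s. left_antipode C L T s \<longrightarrow>
            (\<forall>M r N t. (M, r) \<in> c_ob (EM C T) \<longrightarrow> (N, t) \<in> c_ob (EM C T) \<longrightarrow>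
               is_left_ihom (EM C T) (M, r) (N, t)
                 (ih L M N, ihom_action C L T s M r N t) (ev L M N)))"
proof -
  have A: "left_hopf C T \<Longrightarrow> \<exists>s. left_antipode C L T s" using i_iii by blast
  have B: "left_antipode C L T s \<Longrightarrow> \<exists>H e. left_closed_via (EM C T) H e \<and> forgetful_left_closed C L T H e" for s
    by (rule ap_ii)
  have D: "(\<exists>H e. left_closed_via (EM C T) H e \<and> forgetful_left_closed C L T H e) \<Longrightarrow> left_hopf C T"
    using ii_i by blast
  have E: "\<forall>s. left_antipode C L T s \<longrightarrow>
            (\<forall>M r N t. (M, r) \<in> c_ob (EM C T) \<longrightarrow> (N, t) \<in> c_ob (EM C T) \<longrightarrow>
               is_left_ihom (EM C T) (M, r) (N, t)
                 (ih L M N, ihom_action C L T s M r N t) (ev L M N))"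
    using mor unfolding modl_def by simp
  show ?thesis using A B D E by blast
qed

end

theorem mainTheorem6:
  fixes C :: "('o, 'm) mcat" and L :: "('o, 'm) lclosed" and T :: "('o, 'm) bimon"
  assumes "strict_monoidal C"
    and "left_closed_data C L"
    and "bimonad C T"
  shows "(left_hopf C T \<longleftrightarrow>
            (\<exists>H e. left_closed_via (EM C T) H e \<and> forgetful_left_closed C L T H e))
       \<and> ((\<exists>H e. left_closed_via (EM C T) H e \<and> forgetful_left_closed C L T H e) \<longleftrightarrow>
            (\<exists>s. left_antipode C L T s))
       \<and> (\<forall>s. left_antipode C L T s \<longrightarrow>
            (\<forall>M r N t. (M, r) \<in> c_ob (EM C T) \<longrightarrow> (N, t) \<in> c_ob (EM C T) \<longrightarrow>
               is_left_ihom (EM C T) (M, r) (N, t)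
                 (ih L M N, ihom_action C L T s M r N t) (ev L M N)))"
  using hs.main_hs[OF hs.intro[OF assms]] .


end
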